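(* Let $(W,\{s_i\mid i\in I\})$ be an irreducible Coxeter system, where $I$ has (possibly infinite) cardinality $\kappa$. Let $J\subseteq I$ and suppose $W$ acts 2-transitively on $W/W_J$. Then $\kappa\leq\aleph_0$, and either the Coxeter system is of type $\mathbf A_k$ with $J=I\setminus\{1\}$ or $J=I\setminus\{k\}$, or it is of type $\mathbf A_\omega$ with $J=I\setminus\{1\}$.
   Context: $W_J$ is the subgroup generated by $\{s_j\mid j\in J\}$; $W$ acts on $W/W_J$ by left multiplication. The Coxeter diagram $\mathbf A_k$ is the path with nodes $1,2,\dots,k$ joined consecutively by simple edges ($m_{i,i+1}=3$, all other $m_{ij}=2$ for $i\ne j$); $\mathbf A_\omega$ is the infinite ray with nodes $1,2,3,\dots$ joined consecutively by simple edges. A Coxeter system is irreducible if its Coxeter diagram is connected. *)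

theory Defs
  imports "HOL-Algebra.Algebra"
begin

text \<open>Coxeter matrix entry m(i,j): order of s_i s_j in W (0 encodes infinite order).\<close>
definition cox_m :: "('a, 'b) monoid_scheme \<Rightarrow> ('i \<Rightarrow> 'a) \<Rightarrow> 'i \<Rightarrow> 'i \<Rightarrow> nat" where
  "cox_m W s i j = group.ord W (s i \<otimes>\<^bsub>W\<^esub> s j)"

text \<open>The universal property
  is stated for target groups whose carrier lives in the type of words over I; every group
  generated by a family indexed by I is isomorphic to such a group, so this is the usual
  universal property of the presentation.\<close>
definition coxeter_system :: "('a, 'b) monoid_scheme \<Rightarrow> ('i \<Rightarrow> 'a) \<Rightarrow> 'i set \<Rightarrow> bool" where
  "coxeter_system W s I \<longleftrightarrow>
     group W \<and> s ` I \<subseteq> carrier W \<and> inj_on s I \<and>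
     generate W (s ` I) = carrier W \<and>
     (\<forall>i\<in>I. s i \<noteq> \<one>\<^bsub>W\<^esub> \<and> s i [^]\<^bsub>W\<^esub> (2::nat) = \<one>\<^bsub>W\<^esub>) \<and>
     (\<forall>(H :: 'i list monoid) (t :: 'i \<Rightarrow> 'i list).
        group H \<longrightarrow> t ` I \<subseteq> carrier H \<longrightarrow>
        (\<forall>i\<in>I. t i [^]\<^bsub>H\<^esub> (2::nat) = \<one>\<^bsub>H\<^esub>) \<longrightarrow>
        (\<forall>i\<in>I. \<forall>j\<in>I. cox_m W s i j \<noteq> 0 \<longrightarrow>
            (t i \<otimes>\<^bsub>H\<^esub> t j) [^]\<^bsub>H\<^esub> cox_m W s i j = \<one>\<^bsub>H\<^esub>) \<longrightarrow>
        (\<exists>f\<in>hom W H. \<forall>i\<in>I. f (s i) = t i))"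

definition cox_edge :: "('a, 'b) monoid_scheme \<Rightarrow> ('i \<Rightarrow> 'a) \<Rightarrow> 'i set \<Rightarrow> ('i \<times> 'i) set" where
  "cox_edge W s I = {(i, j). i \<in> I \<and> j \<in> I \<and> i \<noteq> j \<and> cox_m W s i j \<noteq> 2}"

definition irreducible_coxeter_system :: "('a, 'b) monoid_scheme \<Rightarrow> ('i \<Rightarrow> 'a) \<Rightarrow> 'i set \<Rightarrow> bool" where
  "irreducible_coxeter_system W s I \<longleftrightarrow>
     coxeter_system W s I \<and> (\<forall>i\<in>I. \<forall>j\<in>I. (i, j) \<in> (cox_edge W s I)\<^sup>*)"

definition parabolic :: "('a, 'b) monoid_scheme \<Rightarrow> ('i \<Rightarrow> 'a) \<Rightarrow> 'i set \<Rightarrow> 'a set" where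
  "parabolic W s J = generate W (s ` J)"

definition left_cosets :: "('a, 'b) monoid_scheme \<Rightarrow> 'a set \<Rightarrow> 'a set set" where
  "left_cosets W H = {l_coset W w H | w. w \<in> carrier W}"

definition two_transitive :: "('a, 'b) monoid_scheme \<Rightarrow> ('a \<Rightarrow> 'x \<Rightarrow> 'x) \<Rightarrow> 'x set \<Rightarrow> bool" where
  "two_transitive Gr act Y \<longleftrightarrow>
     (\<exists>x\<in>Y. \<exists>y\<in>Y. x \<noteq> y) \<and>
     (\<forall>x1\<in>Y. \<forall>x2\<in>Y. \<forall>y1\<in>Y. \<forall>y2\<in>Y. x1 \<noteq> x2 \<longrightarrow> y1 \<noteq> y2 \<longrightarrow>
        (\<exists>g\<in>carrier Gr. act g x1 = y1 \<and> act g x2 = y2))"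

definition type_A :: "('a, 'b) monoid_scheme \<Rightarrow> ('i \<Rightarrow> 'a) \<Rightarrow> 'i set \<Rightarrow> nat \<Rightarrow> (nat \<Rightarrow> 'i) \<Rightarrow> bool" where
  "type_A W s I k \<phi> \<longleftrightarrow> bij_betw \<phi> {1..k} I \<and>
     (\<forall>a\<in>{1..k}. \<forall>b\<in>{1..k}. a \<noteq> b \<longrightarrow>
        cox_m W s (\<phi> a) (\<phi> b) = (if a + 1 = b \<or> b + 1 = a then 3 else 2))"

definition type_A_omega :: "('a, 'b) monoid_scheme \<Rightarrow> ('i \<Rightarrow> 'a) \<Rightarrow> 'i set \<Rightarrow> (nat \<Rightarrow> 'i) \<Rightarrow> bool" where
  "type_A_omega W s I \<phi> \<longleftrightarrow> bij_betw \<phi> {1..} I \<and>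
     (\<forall>a\<in>{1..}. \<forall>b\<in>{1..}. a \<noteq> b \<longrightarrow>
        cox_m W s (\<phi> a) (\<phi> b) = (if a + 1 = b \<or> b + 1 = a then 3 else 2))"

end

theory Submission
  imports Defs Complex_Main
begin



definition prodl :: "('g, 'c) monoid_scheme \<Rightarrow> ('i \<Rightarrow> 'g) \<Rightarrow> 'i list \<Rightarrow> 'g" where
  "prodl G t xs = foldr (\<lambda>i acc. t i \<otimes>\<^bsub>G\<^esub> acc) xs \<one>\<^bsub>G\<^esub>"

lemma prodl_simps [simp]: "prodl G t [] = \<one>\<^bsub>G\<^esub>" "prodl G t (i # xs) = t i \<otimes>\<^bsub>G\<^esub> prodl G t xs"
  by (simp_all add: prodl_def)

lemma (in group) prodl_closed: "t ` I \<subseteq> carrier G \<Longrightarrow> set xs \<subseteq> I \<Longrightarrow> prodl G t xs \<in> carrier G"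
  by (induct xs) auto

lemma (in group) prodl_append: assumes "t ` I \<subseteq> carrier G" shows "set xs \<subseteq> I \<Longrightarrow> set ys \<subseteq> I \<Longrightarrow>
   prodl G t (xs @ ys) = prodl G t xs \<otimes> prodl G t ys"
proof (induct xs)
  case (Cons a xs)
  then show ?case using assms prodl_closed[OF assms, of xs] prodl_closed[OF assms, of ys]
    by (auto simp: m_assoc)
next
  case Nil
  then show ?case using prodl_closed[OF assms, of ys] by simp
qed

lemma (in group) generate_prodl:
  assumes "t ` I \<subseteq> carrier G" "\<forall>i\<in>I. t i [^] (2::nat) = \<one>"
    and "g \<in> generate G (t ` I)"
  shows "\<exists>xs. set xs \<subseteq> I \<and> prodl G t xs = g"
  using assms(3)
proof (induct g rule: generate.induct)
  case one
  then show ?case by (intro exI[of _ "[]"]) auto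
next
  case (incl h)
  then obtain i where "i \<in> I" "h = t i" by auto
  then show ?case using assms(1) by (intro exI[of _ "[i]"]) auto
next
  case (inv h)
  then obtain i where i: "i \<in> I" "h = t i" by auto
  have ti: "t i \<in> carrier G" using assms(1) i by auto
  have "t i [^] (2::nat) = \<one>" using assms(2) i by auto
  then have "t i \<otimes> t i = \<one>" using ti by (simp add: numeral_2_eq_2)
  then have "inv h = t i" using i ti inv_equality by auto
  then show ?case using i ti by (intro exI[of _ "[i]"]) auto
next
  case (eng h1 h2)
  then obtain xs ys where "set xs \<subseteq> I" "prodl G t xs = h1" "set ys \<subseteq> I" "prodl G t ys = h2" by blast
  then show ?case using prodl_append[OF assms(1)] by (intro exI[of _ "xs @ ys"]) auto
qed

lemma coxeter_hom:
  fixes W :: "('a, 'b) monoid_scheme" and s :: "'i \<Rightarrow> 'a" and G :: "('g, 'c) monoid_scheme"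
  assumes cs: "coxeter_system W s I" and gG: "group G" and tc: "t ` I \<subseteq> carrier G"
    and t2: "\<forall>i\<in>I. t i [^]\<^bsub>G\<^esub> (2::nat) = \<one>\<^bsub>G\<^esub>"
    and trel: "\<forall>i\<in>I. \<forall>j\<in>I. cox_m W s i j \<noteq> 0 \<longrightarrow> (t i \<otimes>\<^bsub>G\<^esub> t j) [^]\<^bsub>G\<^esub> cox_m W s i j = \<one>\<^bsub>G\<^esub>"
  shows "\<exists>f\<in>hom W G. \<forall>i\<in>I. f (s i) = t i"
proof -
  interpret G: group G by fact
  define Gen where "Gen = generate G (t ` I)"
  have sg: "subgroup Gen G" unfolding Gen_def using G.generate_is_subgroup tc by auto
  define enc where "enc g = (SOME xs. set xs \<subseteq> I \<and> prodl G t xs = g)" for g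
  have enc: "set (enc g) \<subseteq> I \<and> prodl G t (enc g) = g" if "g \<in> Gen" for g
  proof -
    have "\<exists>xs. set xs \<subseteq> I \<and> prodl G t xs = g"
      using G.generate_prodl[OF tc t2] that unfolding Gen_def by blast
    then show ?thesis unfolding enc_def by (rule someI_ex)
  qed
  have encinj: "g = h" if "g \<in> Gen" "h \<in> Gen" "enc g = enc h" for g h
    using enc that by metis
  define H :: "'i list monoid" where
    "H = \<lparr>carrier = enc ` Gen, monoid.mult = (\<lambda>a b. enc (prodl G t a \<otimes>\<^bsub>G\<^esub> prodl G t b)), one = enc \<one>\<^bsub>G\<^esub>\<rparr>"
  have cH: "carrier H = enc ` Gen" by (simp add: H_def)
  have oH: "\<one>\<^bsub>H\<^esub> = enc \<one>\<^bsub>G\<^esub>" by (simp add: H_def)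
  have mH: "a \<otimes>\<^bsub>H\<^esub> b = enc (prodl G t a \<otimes>\<^bsub>G\<^esub> prodl G t b)" for a b by (simp add: H_def)
  have Gc: "g \<in> carrier G" if "g \<in> Gen" for g by (rule subgroup.mem_carrier[OF sg that])
  have Hmul: "enc g \<otimes>\<^bsub>H\<^esub> enc h = enc (g \<otimes>\<^bsub>G\<^esub> h)" if "g \<in> Gen" "h \<in> Gen" for g h
    using that by (simp add: mH enc)
  have one_in: "\<one>\<^bsub>G\<^esub> \<in> Gen" by (rule subgroup.one_closed[OF sg])
  have m_in: "g \<otimes>\<^bsub>G\<^esub> h \<in> Gen" if "g \<in> Gen" "h \<in> Gen" for g h
    by (rule subgroup.m_closed[OF sg that])
  have i_in: "inv\<^bsub>G\<^esub> g \<in> Gen" if "g \<in> Gen" for g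
    by (rule subgroup.m_inv_closed[OF sg that])
  have gH: "group H"
  proof (rule groupI)
    fix x y assume "x \<in> carrier H" "y \<in> carrier H"
    then obtain g h where "g \<in> Gen" "h \<in> Gen" "x = enc g" "y = enc h" unfolding cH by blast
    then show "x \<otimes>\<^bsub>H\<^esub> y \<in> carrier H" using Hmul m_in unfolding cH by auto
  next
    show "\<one>\<^bsub>H\<^esub> \<in> carrier H" using one_in unfolding cH oH by blast
  next
    fix x y z assume "x \<in> carrier H" "y \<in> carrier H" "z \<in> carrier H"
    then obtain g h k where "g \<in> Gen" "h \<in> Gen" "k \<in> Gen" "x = enc g" "y = enc h" "z = enc k" unfolding cH by blast
    then show "x \<otimes>\<^bsub>H\<^esub> y \<otimes>\<^bsub>H\<^esub> z = x \<otimes>\<^bsub>H\<^esub> (y \<otimes>\<^bsub>H\<^esub> z)"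
      using Hmul m_in Gc G.m_assoc by metis
  next
    fix x assume "x \<in> carrier H"
    then obtain g where "g \<in> Gen" "x = enc g" unfolding cH by blast
    then show "\<one>\<^bsub>H\<^esub> \<otimes>\<^bsub>H\<^esub> x = x" using Hmul[of "\<one>\<^bsub>G\<^esub>" g] one_in Gc oH
      by (metis G.l_one)
  next
    fix x assume "x \<in> carrier H"
    then obtain g where g: "g \<in> Gen" "x = enc g" unfolding cH by blast
    then show "\<exists>y\<in>carrier H. y \<otimes>\<^bsub>H\<^esub> x = \<one>\<^bsub>H\<^esub>"
      using Hmul[of "inv\<^bsub>G\<^esub> g" g] i_in Gc oH cH
      by (metis G.l_inv image_eqI)
  qed
  have Hpow: "enc g [^]\<^bsub>H\<^esub> (n::nat) = enc (g [^]\<^bsub>G\<^esub> n)" if "g \<in> Gen" for g n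
  proof (induct n)
    case 0 then show ?case by (simp add: oH)
  next
    case (Suc n)
    have "g [^]\<^bsub>G\<^esub> n \<in> Gen" using that
      by (induct n) (auto intro: m_in one_in)
    then show ?case using Suc Hmul that by simp
  qed
  have tGen: "t i \<in> Gen" if "i \<in> I" for i using that unfolding Gen_def by (auto intro: generate.incl)
  define t' where "t' i = enc (t i)" for i
  have "\<exists>f\<in>hom W H. \<forall>i\<in>I. f (s i) = t' i"
  proof -
    have A: "t' ` I \<subseteq> carrier H" using tGen by (auto simp: t'_def cH)
    have B: "\<forall>i\<in>I. t' i [^]\<^bsub>H\<^esub> (2::nat) = \<one>\<^bsub>H\<^esub>"
    proof
      fix i assume "i \<in> I"
      then have "t' i [^]\<^bsub>H\<^esub> (2::nat) = enc (t i [^]\<^bsub>G\<^esub> (2::nat))" using Hpow tGen by (simp add: t'_def)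
      then show "t' i [^]\<^bsub>H\<^esub> (2::nat) = \<one>\<^bsub>H\<^esub>" using t2 \<open>i \<in> I\<close> by (simp add: oH)
    qed
    have C: "\<forall>i\<in>I. \<forall>j\<in>I. cox_m W s i j \<noteq> 0 \<longrightarrow>
            (t' i \<otimes>\<^bsub>H\<^esub> t' j) [^]\<^bsub>H\<^esub> cox_m W s i j = \<one>\<^bsub>H\<^esub>"
    proof (intro ballI impI)
      fix i j assume ij: "i \<in> I" "j \<in> I" "cox_m W s i j \<noteq> 0"
      have "(t' i \<otimes>\<^bsub>H\<^esub> t' j) [^]\<^bsub>H\<^esub> cox_m W s i j = enc ((t i \<otimes>\<^bsub>G\<^esub> t j) [^]\<^bsub>G\<^esub> cox_m W s i j)"
        unfolding t'_def using Hmul[OF tGen tGen] Hpow m_in tGen ij by simp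
      also have "\<dots> = \<one>\<^bsub>H\<^esub>" using trel ij by (simp add: oH)
      finally show "(t' i \<otimes>\<^bsub>H\<^esub> t' j) [^]\<^bsub>H\<^esub> cox_m W s i j = \<one>\<^bsub>H\<^esub>" .
    qed
    show ?thesis using cs gH A B C unfolding coxeter_system_def by blast
  qed
  then obtain f where f: "f \<in> hom W H" "\<forall>i\<in>I. f (s i) = t' i" by blast
  define F where "F x = prodl G t (f x)" for x
  have fx: "f x \<in> enc ` Gen" if "x \<in> carrier W" for x
    using f(1) that unfolding hom_def cH by auto
  have "F \<in> hom W G"
  proof (rule homI)
    fix x assume "x \<in> carrier W"
    then obtain g where "g \<in> Gen" "f x = enc g" using fx by blast
    then show "F x \<in> carrier G" using enc Gc unfolding F_def by simp
  next
    fix x y assume x: "x \<in> carrier W" and y: "y \<in> carrier W"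
    obtain g h where "g \<in> Gen" "h \<in> Gen" "f x = enc g" "f y = enc h" using fx x y by blast
    moreover have "f (x \<otimes>\<^bsub>W\<^esub> y) = f x \<otimes>\<^bsub>H\<^esub> f y" by (rule hom_mult[OF f(1) x y])
    ultimately show "F (x \<otimes>\<^bsub>W\<^esub> y) = F x \<otimes>\<^bsub>G\<^esub> F y" unfolding F_def using Hmul enc m_in by simp
  qed
  moreover have "\<forall>i\<in>I. F (s i) = t i" using f(2) enc tGen by (simp add: F_def t'_def)
  ultimately show ?thesis by blast
qed




lemma sin_rec: "sin ((x::real) + p) = 2 * cos p * sin x - sin (x - p)"
proof -
  have "sin (x + p) = sin x * cos p + cos x * sin p" by (rule sin_add)
  moreover have "sin (x - p) = sin x * cos p - cos x * sin p" by (rule sin_diff)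
  ultimately show ?thesis by simp
qed

lemma cheb_gen:
  fixes a s :: "nat \<Rightarrow> real"
  assumes rec: "\<And>n. a (Suc (Suc n)) = cc * a (Suc n) - a n"
    and srec: "\<And>n. s (Suc (Suc n)) = cc * s (Suc n) - s n" and s0: "s 0 = 0"
  shows "s 1 * a (Suc n) = s (Suc n) * a 1 - s n * a 0"
proof -
  have "(s 1 * a (Suc n) = s (Suc n) * a 1 - s n * a 0) \<and>
        (s 1 * a (Suc (Suc n)) = s (Suc (Suc n)) * a 1 - s (Suc n) * a 0)"
  proof (induct n)
    case 0
    have "s 1 * a (Suc (Suc 0)) = s 1 * (cc * a 1 - a 0)" using rec[of 0] by simp
    also have "\<dots> = (cc * s 1 - s 0) * a 1 - s 1 * a 0" using s0 by (simp add: algebra_simps)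
    also have "\<dots> = s (Suc (Suc 0)) * a 1 - s 1 * a 0" using srec[of 0] by simp
    finally show ?case using s0 by simp
  next
    case (Suc n)
    have "s 1 * a (Suc (Suc (Suc n))) = cc * (s 1 * a (Suc (Suc n))) - s 1 * a (Suc n)"
      by (subst rec) (simp add: algebra_simps)
    also have "\<dots> = cc * (s (Suc (Suc n)) * a 1 - s (Suc n) * a 0) - (s (Suc n) * a 1 - s n * a 0)"
      using Suc by simp
    also have "\<dots> = (cc * s (Suc (Suc n)) - s (Suc n)) * a 1 - (cc * s (Suc n) - s n) * a 0"
      by (simp add: algebra_simps)
    also have "\<dots> = s (Suc (Suc (Suc n))) * a 1 - s (Suc (Suc n)) * a 0"
      using srec[of n] srec[of "Suc n"] by simp
    finally show ?case using Suc by simp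
  qed
  then show ?thesis by blast
qed

lemma cheb:
  fixes a :: "nat \<Rightarrow> real"
  assumes rec: "\<And>n. a (Suc (Suc n)) = 2 * cos p * a (Suc n) - a n"
  shows "sin p * a (Suc n) = sin (real (Suc n) * p) * a 1 - sin (real n * p) * a 0"
proof -
  define s where "s n = sin (real n * p)" for n
  have srec: "s (Suc (Suc n)) = 2 * cos p * s (Suc n) - s n" for n
  proof -
    have "real (Suc (Suc n)) * p = real (Suc n) * p + p" "real n * p = real (Suc n) * p - p"
      by (simp_all add: algebra_simps)
    then show ?thesis unfolding s_def using sin_rec[of "real (Suc n) * p" p] by simp
  qed
  have "s 1 * a (Suc n) = s (Suc n) * a 1 - s n * a 0"
    by (rule cheb_gen[where cc = "2 * cos p"]) (use rec srec in \<open>auto simp: s_def\<close>)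
  then show ?thesis by (simp add: s_def)
qed

definition Tm :: "real \<Rightarrow> real \<Rightarrow> real \<Rightarrow> real \<times> real \<Rightarrow> real \<times> real" where
  "Tm c bi bj z = (let l = fst z; m = snd z; m1 = m - 2 * (bj - c * l + m); l1 = l - 2 * (bi + l - c * m1) in (l1, m1))"

definition Lm :: "real \<Rightarrow> real \<times> real \<Rightarrow> real \<times> real" where
  "Lm c z = (let u = fst z; v = snd z; v1 = - v + 2 * c * u; u1 = - u + 2 * c * v1 in (u1, v1))"

lemma Lm_sq: "fst (Lm c (Lm c z)) = (4 * c^2 - 2) * fst (Lm c z) - fst z \<and>
              snd (Lm c (Lm c z)) = (4 * c^2 - 2) * snd (Lm c z) - snd z"
  by (simp add: Lm_def Let_def power2_eq_square algebra_simps)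

lemma Lm_pow_m:
  assumes m3: "m \<ge> 3"
  shows "(Lm (cos (pi / real m)) ^^ m) z = z"
proof -
  define c where "c = cos (pi / real m)"
  define p where "p = 2 * pi / real m"
  have t: "4 * c^2 - 2 = 2 * cos p"
    unfolding c_def p_def using cos_double_cos[of "pi / real m"] by (simp add: algebra_simps)
  have mpos: "real m > 0" using m3 by simp
  have sp: "sin p > 0"
  proof -
    have "p > 0" unfolding p_def using mpos by simp
    moreover have "p < pi" unfolding p_def using m3 mpos by (simp add: field_simps)
    ultimately show ?thesis by (rule sin_gt_zero)
  qed
  have sm: "sin (real m * p) = 0" unfolding p_def using mpos by simp
  have sm1: "sin (real (m - 1) * p) = - sin p"
  proof -
    have "real (m - 1) * p = 2 * pi - p" unfolding p_def using m3 mpos by (simp add: of_nat_diff field_simps)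
    then show ?thesis by (simp add: sin_diff)
  qed
  have gen: "a m = a 0" if rec: "\<And>n. a (Suc (Suc n)) = 2 * cos p * a (Suc n) - a n" for a :: "nat \<Rightarrow> real"
  proof -
    have "sin p * a (Suc (m - 1)) = sin (real (Suc (m - 1)) * p) * a 1 - sin (real (m - 1) * p) * a 0"
      by (rule cheb) (rule rec)
    moreover have "Suc (m - 1) = m" using m3 by simp
    ultimately have "sin p * a m = sin p * a 0" using sm sm1 by simp
    then show ?thesis using sp by simp
  qed
  have f: "fst ((Lm c ^^ m) z) = fst z"
    using gen[of "\<lambda>n. fst ((Lm c ^^ n) z)"] Lm_sq[of c] t by simp
  have s: "snd ((Lm c ^^ m) z) = snd z"
    using gen[of "\<lambda>n. snd ((Lm c ^^ n) z)"] Lm_sq[of c] t by simp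
  show ?thesis using f s unfolding c_def by (simp add: prod_eq_iff)
qed

lemma Tm_pow_m:
  assumes m2: "m \<ge> 2"
  shows "(Tm (cos (pi / real m)) bi bj ^^ m) (0, 0) = (0, 0)"
proof (cases "m = 2")
  case True
  then have "Tm (cos (pi / real m)) bi bj (Tm (cos (pi / real m)) bi bj z) = z" for z
    by (simp add: Tm_def Let_def)
  then show ?thesis using True by (simp add: numeral_2_eq_2)
next
  case False
  then have m3: "m \<ge> 3" using m2 by simp
  define c where "c = cos (pi / real m)"
  have c1: "c < 1"
  proof -
    have "pi / real m > 0" using m3 by simp
    moreover have "pi / real m \<le> pi" using m3 by (simp add: field_simps)
    ultimately have "cos (pi / real m) < cos 0" by (intro cos_monotone_0_pi) auto
    then show ?thesis unfolding c_def by simp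
  qed
  have c0: "c > -1"
  proof -
    have "pi / real m > 0" using m3 by simp
    moreover have "pi / real m < pi" using m3 by (simp add: field_simps)
    ultimately have "cos (pi / real m) > cos pi" by (intro cos_monotone_0_pi) auto
    then show ?thesis unfolding c_def by simp
  qed
  have "(1 - c) * (1 + c) > 0" using c1 c0 by (intro mult_pos_pos) auto
  then have d: "1 - c^2 \<noteq> 0" by (simp add: power2_eq_square algebra_simps)
  define ms where "ms = - (c * bi + bj) / (1 - c^2)"
  define ls where "ls = c * ms - bi"
  have fix1: "bj - c * ls + ms = 0" unfolding ls_def ms_def using d
    by (simp add: field_simps power2_eq_square)
  have fix2: "bi + ls - c * ms = 0" unfolding ls_def by simp
  have shift: "Tm c bi bj (ls + fst w, ms + snd w) = (ls + fst (Lm c w), ms + snd (Lm c w))" for w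
  proof -
    have bj: "bj = c * ls - ms" and bi: "bi = c * ms - ls" using fix1 fix2 by simp_all
    show ?thesis by (simp add: Tm_def Lm_def Let_def bj bi algebra_simps)
  qed
  have iter: "(Tm c bi bj ^^ n) (ls + fst w, ms + snd w) = (ls + fst ((Lm c ^^ n) w), ms + snd ((Lm c ^^ n) w))" for n w
    by (induct n) (simp_all add: shift)
  have "(Tm c bi bj ^^ m) (0, 0) = (Tm c bi bj ^^ m) (ls + fst (-ls, -ms), ms + snd (-ls, -ms))" by simp
  also have "\<dots> = (ls + fst ((Lm c ^^ m) (-ls, -ms)), ms + snd ((Lm c ^^ m) (-ls, -ms)))" by (rule iter)
  also have "\<dots> = (0, 0)" using Lm_pow_m[OF m3] unfolding c_def by simp
  finally show ?thesis unfolding c_def .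
qed




definition supp :: "('x \<Rightarrow> real) \<Rightarrow> 'x set" where "supp x = {a. x a \<noteq> 0}"
definition adde :: "('x \<Rightarrow> real) \<Rightarrow> real \<Rightarrow> 'x \<Rightarrow> ('x \<Rightarrow> real)" where
  "adde x c a = (\<lambda>b. if b = a then x b + c else x b)"
definition lin :: "('x \<Rightarrow> real) \<Rightarrow> ('x \<Rightarrow> real) \<Rightarrow> real" where
  "lin g x = (\<Sum>b\<in>supp x. x b * g b)"
definition vdiff :: "('x \<Rightarrow> real) \<Rightarrow> ('x \<Rightarrow> real) \<Rightarrow> ('x \<Rightarrow> real)" where
  "vdiff x y = (\<lambda>b. x b - y b)"

lemma lin_superset: "finite S \<Longrightarrow> supp x \<subseteq> S \<Longrightarrow> lin g x = (\<Sum>b\<in>S. x b * g b)"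
  unfolding lin_def by (rule sum.mono_neutral_left) (auto simp: supp_def)

lemma lin_infinite: "infinite (supp x) \<Longrightarrow> lin g x = 0"
  by (simp add: lin_def)

lemma supp_adde: "supp (adde x c a) \<subseteq> insert a (supp x)"
  by (auto simp: supp_def adde_def)

lemma fin_adde: "finite (supp x) \<Longrightarrow> finite (supp (adde x c a))"
  by (rule finite_subset[OF supp_adde]) simp

lemma supp_vdiff: "supp (vdiff x y) \<subseteq> supp x \<union> supp y"
  by (auto simp: supp_def vdiff_def)

lemma fin_vdiff: "finite (supp x) \<Longrightarrow> finite (supp y) \<Longrightarrow> finite (supp (vdiff x y))"
  by (rule finite_subset[OF supp_vdiff]) simp

lemma adde_0 [simp]: "adde x 0 a = x"
  by (rule ext) (simp add: adde_def)

lemma adde_adde_same: "adde (adde x c a) d a = adde x (c + d) a"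
  by (auto simp: adde_def fun_eq_iff)

lemma adde_comm: "a \<noteq> b \<Longrightarrow> adde (adde x c a) d b = adde (adde x d b) c a"
  by (auto simp: adde_def fun_eq_iff)

lemma adde_apply: "adde x c a b = x b + (if b = a then c else 0)"
  by (simp add: adde_def)

lemma lin_adde:
  assumes "finite (supp x)"
  shows "lin g (adde x c a) = lin g x + c * g a"
proof -
  define S where "S = insert a (supp x)"
  have fS: "finite S" using assms by (simp add: S_def)
  have "supp (adde x c a) \<subseteq> S" using supp_adde[of x c a] by (simp add: S_def)
  then have "lin g (adde x c a) = (\<Sum>b\<in>S. adde x c a b * g b)"
    using fS by (intro lin_superset)
  also have "\<dots> = (\<Sum>b\<in>S. x b * g b + (if b = a then c * g a else 0))"
    by (intro sum.cong) (auto simp: adde_apply algebra_simps)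
  also have "\<dots> = (\<Sum>b\<in>S. x b * g b) + c * g a"
    using fS by (simp add: sum.distrib S_def)
  also have "(\<Sum>b\<in>S. x b * g b) = lin g x"
    using fS by (intro lin_superset[symmetric]) (auto simp: S_def)
  finally show ?thesis .
qed

lemma lin_vdiff:
  assumes "finite (supp x)" "finite (supp y)"
  shows "lin g (vdiff x y) = lin g x - lin g y"
proof -
  define S where "S = supp x \<union> supp y"
  have fS: "finite S" using assms by (simp add: S_def)
  have "supp (vdiff x y) \<subseteq> S" using supp_vdiff[of x y] by (simp add: S_def)
  then have "lin g (vdiff x y) = (\<Sum>b\<in>S. vdiff x y b * g b)"
    using fS by (intro lin_superset)
  also have "\<dots> = (\<Sum>b\<in>S. x b * g b) - (\<Sum>b\<in>S. y b * g b)"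
    by (simp add: vdiff_def sum_subtractf algebra_simps)
  also have "\<dots> = lin g x - lin g y"
    using lin_superset[OF fS, of x g] lin_superset[OF fS, of y g] by (simp add: S_def)
  finally show ?thesis .
qed

definition Bm :: "('i \<Rightarrow> 'i \<Rightarrow> real) \<Rightarrow> 'i + 'i \<Rightarrow> 'i + 'i \<Rightarrow> real" where
  "Bm C a b = (case a of Inl i \<Rightarrow> (case b of Inl j \<Rightarrow> C i j | Inr l \<Rightarrow> (if i = l then 1/2 else 0))
                      | Inr l \<Rightarrow> (case b of Inl j \<Rightarrow> (if j = l then 1/2 else 0) | Inr _ \<Rightarrow> 0))"

lemma Bm_simps [simp]:
  "Bm C (Inl i) (Inl j) = C i j" "Bm C (Inl i) (Inr l) = (if i = l then 1/2 else 0)"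
  "Bm C (Inr l) (Inl j) = (if j = l then 1/2 else 0)" "Bm C (Inr l) (Inr l') = 0"
  by (simp_all add: Bm_def)

lemma Bm_sym: "(\<And>i j. C i j = C j i) \<Longrightarrow> Bm C a b = Bm C b a"
  by (cases a; cases b) auto

definition beta :: "('i \<Rightarrow> 'i \<Rightarrow> real) \<Rightarrow> 'i \<Rightarrow> ('i + 'i \<Rightarrow> real) \<Rightarrow> real" where
  "beta C i x = lin (Bm C (Inl i)) x"

definition sig :: "('i \<Rightarrow> 'i \<Rightarrow> real) \<Rightarrow> 'i \<Rightarrow> ('i + 'i \<Rightarrow> real) \<Rightarrow> ('i + 'i \<Rightarrow> real)" where
  "sig C i x = adde x (-2 * beta C i x) (Inl i)"

lemma beta_adde: "finite (supp x) \<Longrightarrow> beta C i (adde x c a) = beta C i x + c * Bm C (Inl i) a"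
  by (simp add: beta_def lin_adde)

lemma beta_infinite: "infinite (supp x) \<Longrightarrow> beta C i x = 0"
  by (simp add: beta_def lin_infinite)

lemma sig_infinite: "infinite (supp x) \<Longrightarrow> sig C i x = x"
  by (simp add: sig_def beta_infinite)

lemma fin_sig: "finite (supp x) \<Longrightarrow> finite (supp (sig C i x))"
  by (simp add: sig_def fin_adde)

lemma sig_invol:
  assumes "C i i = 1"
  shows "sig C i (sig C i x) = x"
proof (cases "finite (supp x)")
  case True
  have "beta C i (sig C i x) = - beta C i x"
    unfolding sig_def using True assms by (simp add: beta_adde)
  then show ?thesis by (simp add: sig_def adde_adde_same)
next
  case False
  then show ?thesis by (simp add: sig_infinite)
qed

lemma sig_rel:
  assumes Cii: "C i i = 1" and Cjj: "C j j = 1" and Cij: "C i j = - cos (pi / real m)"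
    and Cji: "C j i = - cos (pi / real m)" and m2: "m \<ge> 2" and ij: "i \<noteq> j"
  shows "((sig C i \<circ> sig C j) ^^ m) x = x"
proof (cases "finite (supp x)")
  case False
  have "((sig C i \<circ> sig C j) ^^ n) x = x" for n
    by (induct n) (simp_all add: sig_infinite False)
  then show ?thesis .
next
  case True
  define c where "c = cos (pi / real m)"
  define bi where "bi = beta C i x"
  define bj where "bj = beta C j x"
  have it: "((sig C i \<circ> sig C j) ^^ n) x =
     adde (adde x (fst ((Tm c bi bj ^^ n) (0,0))) (Inl i)) (snd ((Tm c bi bj ^^ n) (0,0))) (Inl j)" for n
  proof (induct n)
    case 0 then show ?case by simp
  next
    case (Suc n)
    define l where "l = fst ((Tm c bi bj ^^ n) (0,0))"
    define u where "u = snd ((Tm c bi bj ^^ n) (0,0))"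
    define y where "y = adde (adde x l (Inl i)) u (Inl j)"
    have fy: "finite (supp (adde x l (Inl i)))" using True by (simp add: fin_adde)
    have bjy: "beta C j y = bj - c * l + u"
      unfolding y_def using True fy Cji Cjj by (simp add: beta_adde bj_def c_def)
    define u1 where "u1 = u - 2 * (bj - c * l + u)"
    have sj: "sig C j y = adde (adde x l (Inl i)) u1 (Inl j)"
      unfolding sig_def bjy by (simp add: y_def adde_adde_same u1_def)
    have fy1: "finite (supp (adde x u1 (Inl j)))" using True by (simp add: fin_adde)
    have sj': "sig C j y = adde (adde x u1 (Inl j)) l (Inl i)"
      using sj adde_comm[of "Inl i" "Inl j"] ij by simp
    have biy: "beta C i (sig C j y) = bi + l - c * u1"
      unfolding sj' using True fy1 Cii Cij by (simp add: beta_adde bi_def c_def)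
    define l1 where "l1 = l - 2 * (bi + l - c * u1)"
    have "sig C i (sig C j y) = adde (adde (adde x u1 (Inl j)) l (Inl i)) (-2 * (bi + l - c * u1)) (Inl i)"
      using biy sj' by (simp add: sig_def)
    also have "\<dots> = adde (adde x u1 (Inl j)) l1 (Inl i)"
      by (simp add: adde_adde_same l1_def)
    also have "\<dots> = adde (adde x l1 (Inl i)) u1 (Inl j)" using adde_comm[of "Inl j" "Inl i"] ij by simp
    finally have "sig C i (sig C j y) = adde (adde x l1 (Inl i)) u1 (Inl j)" .
    moreover have "(Tm c bi bj ^^ Suc n) (0,0) = (l1, u1)"
      by (simp add: Tm_def Let_def l_def u_def l1_def u1_def)
    ultimately show ?case using Suc by (simp add: y_def l_def u_def)
  qed
  show ?thesis using it[of m] Tm_pow_m[OF m2] unfolding c_def by simp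
qed

lemma sig_vdiff:
  assumes "finite (supp x)" "finite (supp y)"
  shows "sig C i (vdiff x y) = vdiff (sig C i x) (sig C i y)"
proof -
  have "beta C i (vdiff x y) = beta C i x - beta C i y" unfolding beta_def by (rule lin_vdiff[OF assms])
  then show ?thesis by (auto simp: sig_def vdiff_def adde_def fun_eq_iff algebra_simps)
qed

definition Q :: "('i \<Rightarrow> 'i \<Rightarrow> real) \<Rightarrow> ('i + 'i \<Rightarrow> real) \<Rightarrow> real" where
  "Q C x = (\<Sum>a\<in>supp x. \<Sum>b\<in>supp x. x a * x b * Bm C a b)"

lemma Q_superset:
  assumes "finite S" "supp x \<subseteq> S"
  shows "Q C x = (\<Sum>a\<in>S. \<Sum>b\<in>S. x a * x b * Bm C a b)"
proof -
  have "Q C x = (\<Sum>a\<in>S. \<Sum>b\<in>supp x. x a * x b * Bm C a b)"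
    unfolding Q_def by (rule sum.mono_neutral_left) (use assms in \<open>auto simp: supp_def\<close>)
  also have "\<dots> = (\<Sum>a\<in>S. \<Sum>b\<in>S. x a * x b * Bm C a b)"
    by (intro sum.cong refl sum.mono_neutral_left) (use assms in \<open>auto simp: supp_def\<close>)
  finally show ?thesis .
qed

lemma Q_sig:
  fixes C :: "'i \<Rightarrow> 'i \<Rightarrow> real"
  assumes sym: "\<And>i j. C i j = C j i" and Cii: "C i i = 1" and fx: "finite (supp x)"
  shows "Q C (sig C i x) = Q C x"
proof -
  define a :: "'i + 'i" where "a = Inl i"
  define \<beta> where "\<beta> = beta C i x"
  define c where "c = -2 * \<beta>"
  define S where "S = insert a (supp x)"
  have fS: "finite S" using fx by (simp add: S_def)
  have aS: "a \<in> S" by (simp add: S_def)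
  have sxS: "supp x \<subseteq> S" by (auto simp: S_def)
  have sx: "sig C i x = adde x c a" by (simp add: sig_def a_def c_def \<beta>_def)
  have bsum: "(\<Sum>b\<in>S. x b * Bm C a b) = \<beta>"
    unfolding \<beta>_def beta_def a_def using fS sxS by (intro lin_superset[symmetric]) (auto simp: a_def)
  have bsum2: "(\<Sum>b\<in>S. x b * Bm C b a) = \<beta>"
    using bsum Bm_sym[of C, OF sym] by simp
  have pw: "adde x c a u * adde x c a v * Bm C u v = x u * x v * Bm C u v + (if v = a then x u * c * Bm C u a else 0)
     + (if u = a then c * x v * Bm C a v else 0) + (if u = a then (if v = a then c * c * Bm C a a else 0) else 0)" for u v
    by (auto simp: adde_apply algebra_simps)
  have inner: "(\<Sum>v\<in>S. adde x c a u * adde x c a v * Bm C u v) = (\<Sum>v\<in>S. x u * x v * Bm C u v) + x u * c * Bm C u a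
     + (if u = a then (\<Sum>v\<in>S. c * x v * Bm C a v) else 0) + (if u = a then c * c * Bm C a a else 0)" for u
    unfolding pw by (cases "u = a") (simp_all add: sum.distrib sum.delta[OF fS] aS)
  have supS: "supp (adde x c a) \<subseteq> S" using supp_adde[of x c a] by (simp add: S_def)
  have "Q C (adde x c a) = (\<Sum>u\<in>S. \<Sum>v\<in>S. adde x c a u * adde x c a v * Bm C u v)"
    by (rule Q_superset[OF fS supS])
  also have "\<dots> = (\<Sum>u\<in>S. \<Sum>v\<in>S. x u * x v * Bm C u v) + (\<Sum>u\<in>S. x u * c * Bm C u a)
       + (\<Sum>v\<in>S. c * x v * Bm C a v) + c * c * Bm C a a"
    unfolding inner by (simp add: sum.distrib sum.delta[OF fS] aS)
  also have "(\<Sum>u\<in>S. \<Sum>v\<in>S. x u * x v * Bm C u v) = Q C x"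
    using Q_superset[OF fS sxS, of C] by simp
  also have "(\<Sum>u\<in>S. x u * c * Bm C u a) = c * (\<Sum>u\<in>S. x u * Bm C u a)"
    by (simp add: sum_distrib_left algebra_simps)
  also have "(\<Sum>v\<in>S. c * x v * Bm C a v) = c * (\<Sum>v\<in>S. x v * Bm C a v)"
    by (simp add: sum_distrib_left algebra_simps)
  also have "Q C x + c * (\<Sum>u\<in>S. x u * Bm C u a) + c * (\<Sum>v\<in>S. x v * Bm C a v) + c * c * Bm C a a = Q C x"
    using Cii bsum bsum2 by (simp add: a_def c_def)
  finally show ?thesis using sx by simp
qed




lemma (in group) conj_pow: "x \<in> carrier G \<Longrightarrow> y \<in> carrier G \<Longrightarrow> y \<otimes> (x \<otimes> y) [^] (n::nat) = (y \<otimes> x) [^] n \<otimes> y"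
proof (induct n)
  case 0 then show ?case by simp
next
  case (Suc n)
  have "y \<otimes> (x \<otimes> y) [^] Suc n = y \<otimes> ((x \<otimes> y) [^] n \<otimes> (x \<otimes> y))" by simp
  also have "\<dots> = (y \<otimes> (x \<otimes> y) [^] n) \<otimes> (x \<otimes> y)"
    using Suc.prems by (simp add: m_assoc)
  also have "\<dots> = ((y \<otimes> x) [^] n \<otimes> y) \<otimes> (x \<otimes> y)" using Suc by simp
  also have "\<dots> = ((y \<otimes> x) [^] n \<otimes> (y \<otimes> x)) \<otimes> y" using Suc.prems by (simp add: m_assoc)
  finally show ?case by simp
qed

lemma (in group) pow_comm_one: "x \<in> carrier G \<Longrightarrow> y \<in> carrier G \<Longrightarrow> (x \<otimes> y) [^] (n::nat) = \<one> \<Longrightarrow> (y \<otimes> x) [^] n = \<one>"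
  using conj_pow[of x y n] by (metis l_one r_one nat_pow_closed m_closed r_cancel one_closed)

lemma (in group) ord_comm: "x \<in> carrier G \<Longrightarrow> y \<in> carrier G \<Longrightarrow> ord (x \<otimes> y) = ord (y \<otimes> x)"
proof -
  assume x: "x \<in> carrier G" and y: "y \<in> carrier G"
  have "\<forall>n. (y \<otimes> x) [^] (n::nat) = \<one> \<longleftrightarrow> ord (x \<otimes> y) dvd n"
    using pow_comm_one[OF x y] pow_comm_one[OF y x] pow_eq_id[of "x \<otimes> y"] x y by auto
  then have "ord (y \<otimes> x) = ord (x \<otimes> y)" using ord_unique[of "y \<otimes> x" "ord (x \<otimes> y)"] x y by blast
  then show ?thesis by simp
qed

definition Cm :: "('a, 'b) monoid_scheme \<Rightarrow> ('i \<Rightarrow> 'a) \<Rightarrow> 'i set \<Rightarrow> 'i \<Rightarrow> 'i \<Rightarrow> real" where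
  "Cm W s I i j = (if i = j then 1 else if i \<in> I \<and> j \<in> I then
      (if cox_m W s i j = 0 then -1 else - cos (pi / real (cox_m W s i j))) else 0)"

lemma cs_group: "coxeter_system W s I \<Longrightarrow> group W"
  by (simp add: coxeter_system_def)

lemma cs_sc: "coxeter_system W s I \<Longrightarrow> i \<in> I \<Longrightarrow> s i \<in> carrier W"
  by (auto simp: coxeter_system_def)

lemma cs_sq: "coxeter_system W s I \<Longrightarrow> i \<in> I \<Longrightarrow> s i \<otimes>\<^bsub>W\<^esub> s i = \<one>\<^bsub>W\<^esub>"
proof -
  assume cs: "coxeter_system W s I" and i: "i \<in> I"
  interpret W: group W using cs by (simp add: coxeter_system_def)
  have "s i [^]\<^bsub>W\<^esub> (2::nat) = \<one>\<^bsub>W\<^esub>" using cs i by (simp add: coxeter_system_def)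
  then show ?thesis using cs_sc[OF cs i] by (simp add: numeral_2_eq_2)
qed

lemma cs_inv: assumes cs: "coxeter_system W s I" and i: "i \<in> I" shows "inv\<^bsub>W\<^esub> (s i) = s i"
  by (rule group.inv_equality[OF cs_group[OF cs] cs_sq[OF cs i] cs_sc[OF cs i] cs_sc[OF cs i]])

lemma cox_m_sym: assumes cs: "coxeter_system W s I" and i: "i \<in> I" and j: "j \<in> I"
  shows "cox_m W s i j = cox_m W s j i"
  unfolding cox_m_def by (rule group.ord_comm[OF cs_group[OF cs] cs_sc[OF cs i] cs_sc[OF cs j]])

lemma cox_m_refl: assumes cs: "coxeter_system W s I" and i: "i \<in> I" shows "cox_m W s i i = 1"
  by (simp add: cox_m_def cs_sq[OF cs i] group.ord_id[OF cs_group[OF cs]])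

lemma cox_m_ne1: 
  assumes cs: "coxeter_system W s I" and i: "i \<in> I" and j: "j \<in> I" and ij: "i \<noteq> j"
  shows "cox_m W s i j \<noteq> 1"
proof
  assume m: "cox_m W s i j = 1"
  interpret W: group W by (rule cs_group[OF cs])
  have si: "s i \<in> carrier W" and sj: "s j \<in> carrier W" using cs_sc[OF cs] i j by auto
  have "s i \<otimes>\<^bsub>W\<^esub> s j = \<one>\<^bsub>W\<^esub>" using m W.ord_eq_1[OF W.m_closed[OF si sj]] unfolding cox_m_def by simp
  then have "inv\<^bsub>W\<^esub> (s j) = s i" by (rule W.inv_equality[OF _ sj si])
  then have "s j = s i" using cs_inv[OF cs j] by simp
  moreover have "inj_on s I" using cs by (simp add: coxeter_system_def)
  ultimately show False using ij i j inj_onD by metis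
qed

lemma Cm_sym: assumes cs: "coxeter_system W s I" shows "Cm W s I i j = Cm W s I j i"
proof (cases "i \<in> I \<and> j \<in> I")
  case True
  then have "cox_m W s i j = cox_m W s j i" using cox_m_sym[OF cs] by blast
  then show ?thesis unfolding Cm_def by simp
next
  case False
  then show ?thesis unfolding Cm_def by auto
qed

lemma Cm_refl [simp]: "Cm W s I i i = 1"
  by (simp add: Cm_def)

lemma Bij_UNIV_sig: assumes "C i i = 1" shows "sig C i \<in> Bij UNIV"
proof -
  have e: "sig C i \<circ> sig C i = id" by (rule ext) (simp add: sig_invol[of C i, OF assms])
  have "bij (sig C i)" by (rule o_bij[OF e e])
  then show ?thesis unfolding Bij_def by simp
qed

lemma BijU_mult: "f \<in> Bij UNIV \<Longrightarrow> g \<in> Bij UNIV \<Longrightarrow> f \<otimes>\<^bsub>BijGroup UNIV\<^esub> g = f \<circ> g"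
  unfolding BijGroup_def compose_def by (simp add: restrict_def o_def)

lemma BijU_one: "\<one>\<^bsub>BijGroup UNIV\<^esub> = id"
  unfolding BijGroup_def by (simp add: restrict_def id_def)

lemma BijU_carrier: "carrier (BijGroup S) = Bij S"
  unfolding BijGroup_def by simp

lemma BijU_pow: "f \<in> Bij UNIV \<Longrightarrow> f [^]\<^bsub>BijGroup UNIV\<^esub> (n::nat) = f ^^ n"
proof (induct n)
  case 0 then show ?case by (simp add: BijU_one)
next
  case (Suc n)
  have "f [^]\<^bsub>BijGroup UNIV\<^esub> n \<in> Bij UNIV"
    using monoid.nat_pow_closed[OF group.is_monoid[OF group_BijGroup], of f UNIV n] Suc.prems by (simp add: BijU_carrier)
  then show ?case using Suc by (simp add: BijU_mult o_def funpow_swap1)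
qed

lemma comp_Bij: "f \<in> Bij UNIV \<Longrightarrow> g \<in> Bij UNIV \<Longrightarrow> f \<circ> g \<in> Bij UNIV"
proof -
  assume "f \<in> Bij UNIV" "g \<in> Bij UNIV"
  then have "compose UNIV f g \<in> Bij UNIV" by (rule compose_Bij)
  moreover have "compose UNIV f g = f \<circ> g" by (simp add: compose_def restrict_def o_def)
  ultimately show ?thesis by simp
qed

lemma rho_exists:
  assumes cs: "coxeter_system W s I"
  shows "\<exists>\<rho>\<in>hom W (BijGroup (UNIV :: ('i + 'i \<Rightarrow> real) set)). \<forall>i\<in>I. \<rho> (s i) = sig (Cm W s I) i"
proof -
  define C where "C = Cm W s I"
  have sB: "sig C i \<in> Bij UNIV" for i by (rule Bij_UNIV_sig) (simp add: C_def)
  have "\<exists>\<rho>\<in>hom W (BijGroup (UNIV :: ('i + 'i \<Rightarrow> real) set)). \<forall>i\<in>I. \<rho> (s i) = sig C i"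
  proof (rule coxeter_hom[OF cs group_BijGroup])
    show "sig C ` I \<subseteq> carrier (BijGroup UNIV)"
      using sB by (auto simp: BijU_carrier)
    show "\<forall>i\<in>I. sig C i [^]\<^bsub>BijGroup UNIV\<^esub> (2::nat) = \<one>\<^bsub>BijGroup UNIV\<^esub>"
    proof
      fix i assume "i \<in> I"
      have "sig C i [^]\<^bsub>BijGroup UNIV\<^esub> (2::nat) = sig C i ^^ 2" by (rule BijU_pow[OF sB])
      also have "\<dots> = id" by (simp add: numeral_2_eq_2 fun_eq_iff sig_invol C_def)
      finally show "sig C i [^]\<^bsub>BijGroup UNIV\<^esub> (2::nat) = \<one>\<^bsub>BijGroup UNIV\<^esub>" by (simp add: BijU_one)
    qed
    show "\<forall>i\<in>I. \<forall>j\<in>I. cox_m W s i j \<noteq> 0 \<longrightarrow>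
        (sig C i \<otimes>\<^bsub>BijGroup UNIV\<^esub> sig C j) [^]\<^bsub>BijGroup UNIV\<^esub> cox_m W s i j = \<one>\<^bsub>BijGroup UNIV\<^esub>"
    proof (intro ballI impI)
      fix i j assume i: "i \<in> I" and j: "j \<in> I" and m0: "cox_m W s i j \<noteq> 0"
      define m where "m = cox_m W s i j"
      have cB: "sig C i \<circ> sig C j \<in> Bij UNIV" by (rule comp_Bij[OF sB sB])
      have "(sig C i \<otimes>\<^bsub>BijGroup UNIV\<^esub> sig C j) [^]\<^bsub>BijGroup UNIV\<^esub> m = (sig C i \<circ> sig C j) [^]\<^bsub>BijGroup UNIV\<^esub> m"
        by (simp add: BijU_mult[OF sB sB])
      also have "\<dots> = (sig C i \<circ> sig C j) ^^ m" by (rule BijU_pow[OF cB])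
      also have "\<dots> = id"
      proof (cases "i = j")
        case True
        then have "m = 1" using cox_m_refl[OF cs i] by (simp add: m_def)
        then show ?thesis using True by (simp add: fun_eq_iff sig_invol C_def)
      next
        case False
        have m2: "m \<ge> 2" using m0 cox_m_ne1[OF cs i j False] unfolding m_def by linarith
        have "((sig C i \<circ> sig C j) ^^ m) x = x" for x
        proof (rule sig_rel)
          show "C i j = - cos (pi / real m)" using i j False m0 by (simp add: C_def Cm_def m_def)
          show "C j i = - cos (pi / real m)" using i j False m0 cox_m_sym[OF cs i j] by (simp add: C_def Cm_def m_def)
        qed (use m2 False in \<open>auto simp: C_def\<close>)
        then show ?thesis by (simp add: fun_eq_iff)
      qed
      finally show "(sig C i \<otimes>\<^bsub>BijGroup UNIV\<^esub> sig C j) [^]\<^bsub>BijGroup UNIV\<^esub> cox_m W s i j = \<one>\<^bsub>BijGroup UNIV\<^esub>"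
        by (simp add: BijU_one m_def)
    qed
  qed
  then show ?thesis by (simp add: C_def)
qed

definition cval :: "nat \<Rightarrow> real" where "cval M = (if M = 0 then 1 else cos (pi / real M))"

lemma cval_facts:
  assumes "M \<noteq> 1"
  shows "cval M \<ge> 0" "cval M = 0 \<longleftrightarrow> M = 2" "M \<noteq> 2 \<Longrightarrow> cval M \<ge> 1/2" "cval M = 1/2 \<longleftrightarrow> M = 3"
proof -
  have c3: "cval M \<ge> 1/2 \<and> (cval M = 1/2 \<longleftrightarrow> M = 3)" if "M \<noteq> 2" 
  proof (cases "M = 0")
    case True then show ?thesis by (simp add: cval_def)
  next
    case False
    then have M3: "M \<ge> 3" using assms that by linarith
    have le: "pi / real M \<le> pi / 3" by (rule divide_left_mono) (use M3 in auto)
    have pos: "pi / real M > 0" using M3 by simp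
    have "cos (pi / 3) \<le> cos (pi / real M)"
      by (rule cos_monotone_0_pi_le) (use le pos in auto)
    moreover have "cos (pi / 3) < cos (pi / real M)" if "M \<noteq> 3"
    proof (rule cos_monotone_0_pi)
      have "real M > 3" using M3 that by simp
      then show "pi / real M < pi / 3" by (simp add: field_simps)
    qed (use pos in auto)
    ultimately show ?thesis
    proof (cases "M = 3")
      case True then show ?thesis by (simp add: cval_def cos_60)
    next
      case F3: False
      have "cos (pi / 3) < cos (pi / real M)" using \<open>M \<noteq> 3 \<Longrightarrow> _\<close> F3 by blast
      then show ?thesis using False F3 by (simp add: cval_def cos_60)
    qed
  qed
  show "cval M \<ge> 0" using c3 by (cases "M = 2") (auto simp: cval_def)
  show "cval M = 0 \<longleftrightarrow> M = 2" using c3 by (cases "M = 2") (auto simp: cval_def)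
  show "M \<noteq> 2 \<Longrightarrow> cval M \<ge> 1/2" using c3 by auto
  show "cval M = 1/2 \<longleftrightarrow> M = 3" using c3 by (cases "M = 2") (auto simp: cval_def)
qed

lemma Cm_cval: "i \<in> I \<Longrightarrow> j \<in> I \<Longrightarrow> i \<noteq> j \<Longrightarrow> Cm W s I i j = - cval (cox_m W s i j)"
  by (simp add: Cm_def cval_def)




definition om :: "'i \<Rightarrow> ('i + 'i \<Rightarrow> real)" where "om l = (\<lambda>b. if b = Inr l then 1 else 0)"

lemma supp_om: "supp (om l) = {Inr l}" by (auto simp: supp_def om_def)
lemma fin_om: "finite (supp (om l))" by (simp add: supp_om)

lemma beta_om: "beta C j (om l) = (if j = l then 1/2 else 0)"
proof -
  have "beta C j (om l) = (\<Sum>b\<in>{Inr l}. om l b * Bm C (Inl j) b)"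
    unfolding beta_def by (rule lin_superset) (auto simp: supp_om)
  then show ?thesis by (simp add: om_def)
qed

lemma sig_om_other: "j \<noteq> l \<Longrightarrow> sig C j (om l) = om l"
  by (simp add: sig_def beta_om)

lemma sig_om_self: "sig C l (om l) = adde (om l) (-1) (Inl l)"
  by (simp add: sig_def beta_om)

lemma sig_om_ne: "sig C l (om l) \<noteq> om l"
proof
  have a: "sig C l (om l) (Inl l) = -1" by (simp only: sig_om_self) (simp add: adde_def om_def)
  have b: "om l (Inl l) = 0" by (simp add: om_def)
  assume eq: "sig C l (om l) = om l"
  from a have "om l (Inl l) = -1" by (simp only: eq)
  with b show False by simp
qed

lemma Q_one:
  "Q C (\<lambda>b. if b = a then x else 0) = x * x * Bm C a a"
proof -
  have "Q C (\<lambda>b. if b = a then x else 0) = (\<Sum>u\<in>{a}. \<Sum>v\<in>{a}. (if u = a then x else 0) * (if v = a then x else 0) * Bm C u v)"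
    by (rule Q_superset) (auto simp: supp_def)
  then show ?thesis by simp
qed

lemma Q_two:
  assumes "a1 \<noteq> a2" and sym: "Bm C a2 a1 = Bm C a1 a2"
  shows "Q C (\<lambda>b. if b = a1 then x1 else if b = a2 then x2 else 0) = x1 * x1 * Bm C a1 a1 + x2 * x2 * Bm C a2 a2 + 2 * x1 * x2 * Bm C a1 a2"
proof -
  let ?f = "\<lambda>b. if b = a1 then x1 else if b = a2 then x2 else 0"
  have "Q C ?f = (\<Sum>u\<in>{a1, a2}. \<Sum>v\<in>{a1, a2}. ?f u * ?f v * Bm C u v)"
    by (rule Q_superset) (auto simp: supp_def)
  then show ?thesis using assms by (simp add: algebra_simps)
qed

locale tt_setup =
  fixes W :: "('a, 'b) monoid_scheme" and s :: "'i \<Rightarrow> 'a" and I J :: "'i set"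
    and \<rho> :: "'a \<Rightarrow> ('i + 'i \<Rightarrow> real) \<Rightarrow> ('i + 'i \<Rightarrow> real)"
  assumes cs: "coxeter_system W s I" and JI: "J \<subseteq> I"
    and tt: "two_transitive W (\<lambda>w C. l_coset W w C) (left_cosets W (parabolic W s J))"
    and rho: "\<rho> \<in> hom W (BijGroup UNIV)"
    and rho_s: "\<forall>i\<in>I. \<rho> (s i) = sig (Cm W s I) i"
begin

abbreviation "C \<equiv> Cm W s I"
abbreviation "H \<equiv> parabolic W s J"

lemma grp: "group W" by (rule cs_group[OF cs])

lemma sI: "s ` I \<subseteq> carrier W" using cs by (simp add: coxeter_system_def)

lemma genW: "generate W (s ` I) = carrier W" using cs by (simp add: coxeter_system_def)

lemma rho_carrier: "g \<in> carrier W \<Longrightarrow> \<rho> g \<in> Bij UNIV"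
  using rho unfolding hom_def by (auto simp: BijU_carrier)

lemma rho_mult: "g \<in> carrier W \<Longrightarrow> h \<in> carrier W \<Longrightarrow> \<rho> (g \<otimes>\<^bsub>W\<^esub> h) = \<rho> g \<circ> \<rho> h"
  using hom_mult[OF rho] rho_carrier BijU_mult by metis

lemma rho_one: "\<rho> \<one>\<^bsub>W\<^esub> = id"
  using hom_one[OF rho grp group_BijGroup] BijU_one by metis

lemma Csym: "C i j = C j i" by (rule Cm_sym[OF cs])

definition good_map :: "(('i + 'i \<Rightarrow> real) \<Rightarrow> ('i + 'i \<Rightarrow> real)) \<Rightarrow> bool" where
  "good_map f \<longleftrightarrow> (\<forall>x. finite (supp x) \<longrightarrow> finite (supp (f x))) \<and>
     (\<forall>x y. finite (supp x) \<longrightarrow> finite (supp y) \<longrightarrow> f (vdiff x y) = vdiff (f x) (f y)) \<and>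
     (\<forall>x. finite (supp x) \<longrightarrow> Q C (f x) = Q C x)"

lemma good_sig: "good_map (sig C i)"
  unfolding good_map_def using fin_sig sig_vdiff Q_sig[of C i] Csym by auto

lemma good_comp: "good_map f \<Longrightarrow> good_map g \<Longrightarrow> good_map (f \<circ> g)"
  unfolding good_map_def by auto

lemma good_id: "good_map id" unfolding good_map_def by auto

lemma rho_good: "g \<in> carrier W \<Longrightarrow> good_map (\<rho> g)"
proof -
  assume "g \<in> carrier W"
  then have "g \<in> generate W (s ` I)" using genW by simp
  then show "good_map (\<rho> g)"
  proof (induct g rule: generate.induct)
    case one then show ?case by (simp only: rho_one good_id)
  next
    case (incl h)
    then obtain i where "i \<in> I" "h = s i" by auto
    then show ?case using rho_s good_sig by simp
  next
    case (inv h)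
    then obtain i where "i \<in> I" "h = s i" by auto
    then show ?case using rho_s good_sig cs_inv[OF cs] by simp
  next
    case (eng h1 h2)
    have "h1 \<in> carrier W" "h2 \<in> carrier W"
      using group.generate_in_carrier[OF grp sI eng(1)] group.generate_in_carrier[OF grp sI eng(3)] by auto
    then have "\<rho> (h1 \<otimes>\<^bsub>W\<^esub> h2) = \<rho> h1 \<circ> \<rho> h2" by (rule rho_mult)
    then show ?case by (simp only:) (rule good_comp[OF eng(2) eng(4)])
  qed
qed

lemma sJ: "s ` J \<subseteq> carrier W" using sI JI by auto

lemma H_sub: "H \<subseteq> carrier W"
  unfolding parabolic_def by (rule group.generate_incl[OF grp sJ])

lemma fix_om: "h \<in> H \<Longrightarrow> l \<notin> J \<Longrightarrow> \<rho> h (om l) = om l"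
proof -
  assume h: "h \<in> H" and l: "l \<notin> J"
  from h[unfolded parabolic_def] show ?thesis
  proof (induct h rule: generate.induct)
    case one then show ?case using rho_one by simp
  next
    case (incl h)
    then obtain j where j: "j \<in> J" "h = s j" by auto
    then have "j \<in> I" "j \<noteq> l" using JI l by auto
    then show ?case using rho_s j sig_om_other[of j l C] by simp
  next
    case (inv h)
    then obtain j where j: "j \<in> J" "h = s j" by auto
    then have "j \<in> I" "j \<noteq> l" using JI l by auto
    then show ?case using rho_s j sig_om_other[of j l C] cs_inv[OF cs] by simp
  next
    case (eng h1 h2)
    have "h1 \<in> carrier W" "h2 \<in> carrier W"
      using group.generate_in_carrier[OF grp sJ eng(1)] group.generate_in_carrier[OF grp sJ eng(3)] by auto
    then have "\<rho> (h1 \<otimes>\<^bsub>W\<^esub> h2) = \<rho> h1 \<circ> \<rho> h2" by (rule rho_mult)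
    then show ?case using eng(2,4) by simp
  qed
qed

lemma one_H: "\<one>\<^bsub>W\<^esub> \<in> H"
  unfolding parabolic_def by (rule subgroup.one_closed[OF group.generate_is_subgroup[OF grp sJ]])

lemma coset_mem: "u \<in> carrier W \<Longrightarrow> u \<in> u <#\<^bsub>W\<^esub> H"
proof -
  assume u: "u \<in> carrier W"
  have "u = u \<otimes>\<^bsub>W\<^esub> \<one>\<^bsub>W\<^esub>" using u by (simp add: monoid.r_one[OF group.is_monoid[OF grp]])
  then show ?thesis unfolding l_coset_def using one_H by blast
qed

lemma coset_eq:
  assumes w: "w \<in> carrier W" and u: "u \<in> carrier W" and eq: "w <#\<^bsub>W\<^esub> H = u <#\<^bsub>W\<^esub> H" and l: "l \<notin> J"
  shows "\<rho> w (om l) = \<rho> u (om l)"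
proof -
  have "u \<in> w <#\<^bsub>W\<^esub> H" using coset_mem[OF u] eq by simp
  then obtain h where h: "h \<in> H" "u = w \<otimes>\<^bsub>W\<^esub> h" unfolding l_coset_def by auto
  then have "\<rho> u = \<rho> w \<circ> \<rho> h" using rho_mult w H_sub by auto
  then show ?thesis using fix_om[OF h(1) l] by simp
qed

lemma tt_pairs:
  assumes w1: "w1 \<in> carrier W" and w2: "w2 \<in> carrier W" and u1: "u1 \<in> carrier W" and u2: "u2 \<in> carrier W"
    and ne1: "w1 <#\<^bsub>W\<^esub> H \<noteq> w2 <#\<^bsub>W\<^esub> H" and ne2: "u1 <#\<^bsub>W\<^esub> H \<noteq> u2 <#\<^bsub>W\<^esub> H"
  shows "\<exists>g\<in>carrier W. (g \<otimes>\<^bsub>W\<^esub> w1) <#\<^bsub>W\<^esub> H = u1 <#\<^bsub>W\<^esub> H \<and> (g \<otimes>\<^bsub>W\<^esub> w2) <#\<^bsub>W\<^esub> H = u2 <#\<^bsub>W\<^esub> H"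
proof -
  have mem: "x <#\<^bsub>W\<^esub> H \<in> left_cosets W H" if "x \<in> carrier W" for x
    using that unfolding left_cosets_def by blast
  obtain g where g: "g \<in> carrier W" "g <#\<^bsub>W\<^esub> (w1 <#\<^bsub>W\<^esub> H) = u1 <#\<^bsub>W\<^esub> H" "g <#\<^bsub>W\<^esub> (w2 <#\<^bsub>W\<^esub> H) = u2 <#\<^bsub>W\<^esub> H"
    using tt mem[OF w1] mem[OF w2] mem[OF u1] mem[OF u2] ne1 ne2 unfolding two_transitive_def by blast
  then show ?thesis using group.lcos_m_assoc[OF grp H_sub] w1 w2 by metis
qed

lemma exists_k: "\<exists>k\<in>I. k \<notin> J"
proof (rule ccontr)
  assume "\<not> ?thesis"
  then have "J = I" using JI by blast
  then have HW: "H = carrier W" using genW by (simp add: parabolic_def)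
  have cosW: "x <#\<^bsub>W\<^esub> H = carrier W" if x: "x \<in> carrier W" for x
  proof
    show "x <#\<^bsub>W\<^esub> H \<subseteq> carrier W"
      unfolding HW l_coset_def using x monoid.m_closed[OF group.is_monoid[OF grp]] by blast
    show "carrier W \<subseteq> x <#\<^bsub>W\<^esub> H"
    proof
      fix y assume y: "y \<in> carrier W"
      have iy: "inv\<^bsub>W\<^esub> x \<otimes>\<^bsub>W\<^esub> y \<in> carrier W"
        using y x group.inv_closed[OF grp] monoid.m_closed[OF group.is_monoid[OF grp]] by blast
      have "y = x \<otimes>\<^bsub>W\<^esub> (inv\<^bsub>W\<^esub> x \<otimes>\<^bsub>W\<^esub> y)" using y x group.inv_solve_left[OF grp] iy by metis
      then show "y \<in> x <#\<^bsub>W\<^esub> H" unfolding l_coset_def HW using iy by blast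
    qed
  qed
  have "left_cosets W H \<subseteq> {carrier W}" unfolding left_cosets_def using cosW by auto
  then show False using tt unfolding two_transitive_def by blast
qed

lemma one_W: "\<one>\<^bsub>W\<^esub> \<in> carrier W" by (rule monoid.one_closed[OF group.is_monoid[OF grp]])

lemma mW: "x \<in> carrier W \<Longrightarrow> y \<in> carrier W \<Longrightarrow> x \<otimes>\<^bsub>W\<^esub> y \<in> carrier W"
  by (rule monoid.m_closed[OF group.is_monoid[OF grp]])

lemma coset_ne_sk: assumes k: "k \<in> I" "k \<notin> J" shows "\<one>\<^bsub>W\<^esub> <#\<^bsub>W\<^esub> H \<noteq> s k <#\<^bsub>W\<^esub> H"
proof
  have sk: "s k \<in> carrier W" using sI k by auto
  assume eq: "\<one>\<^bsub>W\<^esub> <#\<^bsub>W\<^esub> H = s k <#\<^bsub>W\<^esub> H"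
  have "\<rho> \<one>\<^bsub>W\<^esub> (om k) = \<rho> (s k) (om k)" by (rule coset_eq[OF one_W sk eq k(2)])
  then have "om k = sig C k (om k)" using rho_one rho_s k(1) by simp
  then show False using sig_om_ne[of C k] by simp
qed

lemma unique_k:
  assumes k: "k \<in> I" "k \<notin> J" and k': "k' \<in> I" "k' \<notin> J"
  shows "k = k'"
proof (rule ccontr)
  assume ne: "k \<noteq> k'"
  have sk: "s k \<in> carrier W" "s k' \<in> carrier W" using sI k k' by auto
  from tt_pairs[OF one_W sk(1) one_W sk(2) coset_ne_sk[OF k] coset_ne_sk[OF k']]
  obtain g where g: "g \<in> carrier W" "(g \<otimes>\<^bsub>W\<^esub> \<one>\<^bsub>W\<^esub>) <#\<^bsub>W\<^esub> H = \<one>\<^bsub>W\<^esub> <#\<^bsub>W\<^esub> H"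
      "(g \<otimes>\<^bsub>W\<^esub> s k) <#\<^bsub>W\<^esub> H = s k' <#\<^bsub>W\<^esub> H" by blast
  have "\<rho> (g \<otimes>\<^bsub>W\<^esub> \<one>\<^bsub>W\<^esub>) (om k') = \<rho> \<one>\<^bsub>W\<^esub> (om k')"
    by (rule coset_eq[OF mW[OF g(1) one_W] one_W g(2) k'(2)])
  then have gfix: "\<rho> g (om k') = om k'" using rho_mult[OF g(1) one_W] rho_one by simp
  have "\<rho> (g \<otimes>\<^bsub>W\<^esub> s k) (om k') = \<rho> (s k') (om k')"
    by (rule coset_eq[OF mW[OF g(1) sk(1)] sk(2) g(3) k'(2)])
  moreover have "\<rho> (g \<otimes>\<^bsub>W\<^esub> s k) (om k') = om k'"
    using rho_mult[OF g(1) sk(1)] rho_s k(1) sig_om_other[of k k' C] ne gfix by simp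
  ultimately have "sig C k' (om k') = om k'" using rho_s k'(1) by simp
  then show False using sig_om_ne[of C k'] by simp
qed

lemma lemmaP:
  assumes k: "k \<in> I" "k \<notin> J" and w: "w \<in> carrier W" and u: "u \<in> carrier W"
    and ne: "\<rho> w (om k) \<noteq> \<rho> u (om k)"
  shows "Q C (vdiff (\<rho> w (om k)) (\<rho> u (om k))) = 1"
proof -
  have one: "\<one>\<^bsub>W\<^esub> \<in> carrier W" by (rule one_W)
  have sk: "s k \<in> carrier W" using sI k by auto
  have d1: "\<one>\<^bsub>W\<^esub> <#\<^bsub>W\<^esub> H \<noteq> s k <#\<^bsub>W\<^esub> H" by (rule coset_ne_sk[OF k])
  have d0: "w <#\<^bsub>W\<^esub> H \<noteq> u <#\<^bsub>W\<^esub> H"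
  proof
    assume "w <#\<^bsub>W\<^esub> H = u <#\<^bsub>W\<^esub> H"
    from coset_eq[OF w u this k(2)] ne show False by simp
  qed
  from tt_pairs[OF w u one sk d0 d1]
  obtain g where g: "g \<in> carrier W" "(g \<otimes>\<^bsub>W\<^esub> w) <#\<^bsub>W\<^esub> H = \<one>\<^bsub>W\<^esub> <#\<^bsub>W\<^esub> H"
      "(g \<otimes>\<^bsub>W\<^esub> u) <#\<^bsub>W\<^esub> H = s k <#\<^bsub>W\<^esub> H" by blast
  have gw: "g \<otimes>\<^bsub>W\<^esub> w \<in> carrier W" "g \<otimes>\<^bsub>W\<^esub> u \<in> carrier W"
    using mW g(1) w u by auto
  have e1: "\<rho> g (\<rho> w (om k)) = om k"
    using coset_eq[OF gw(1) one g(2) k(2)] rho_mult[OF g(1) w] rho_one by simp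
  have e2: "\<rho> g (\<rho> u (om k)) = sig C k (om k)"
    using coset_eq[OF gw(2) sk g(3) k(2)] rho_mult[OF g(1) u] rho_s k by simp
  have G: "good_map (\<rho> g)" by (rule rho_good[OF g(1)])
  have fw1: "finite (supp (\<rho> w (om k)))" using rho_good[OF w] fin_om[of k] unfolding good_map_def by blast
  have fw2: "finite (supp (\<rho> u (om k)))" using rho_good[OF u] fin_om[of k] unfolding good_map_def by blast
  note fw = fw1 fw2
  have fd: "finite (supp (vdiff (\<rho> w (om k)) (\<rho> u (om k))))" by (rule fin_vdiff[OF fw])
  have "Q C (vdiff (\<rho> w (om k)) (\<rho> u (om k))) = Q C (\<rho> g (vdiff (\<rho> w (om k)) (\<rho> u (om k))))"
    using G fd unfolding good_map_def by simp
  also have "\<rho> g (vdiff (\<rho> w (om k)) (\<rho> u (om k))) = vdiff (om k) (sig C k (om k))"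
    using G fw e1 e2 unfolding good_map_def by simp
  also have "vdiff (om k) (sig C k (om k)) = (\<lambda>b. if b = Inl k then 1 else 0)"
    by (simp only: sig_om_self) (auto simp: vdiff_def adde_def om_def fun_eq_iff)
  also have "Q C \<dots> = 1" by (simp add: Q_one)
  finally show ?thesis .
qed

end




definition ypath :: "'i \<Rightarrow> (nat \<Rightarrow> 'i) \<Rightarrow> nat \<Rightarrow> ('i + 'i \<Rightarrow> real)" where
  "ypath k p d = (\<lambda>b. if b = Inr k then 1 else if b \<in> Inl ` p ` {1..d} then -1 else 0)"

primrec wp :: "('a, 'b) monoid_scheme \<Rightarrow> ('i \<Rightarrow> 'a) \<Rightarrow> (nat \<Rightarrow> 'i) \<Rightarrow> nat \<Rightarrow> 'a" where
  "wp W s p 0 = \<one>\<^bsub>W\<^esub>"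
| "wp W s p (Suc d) = s (p (Suc d)) \<otimes>\<^bsub>W\<^esub> wp W s p d"

definition goodp :: "('a, 'b) monoid_scheme \<Rightarrow> ('i \<Rightarrow> 'a) \<Rightarrow> 'i set \<Rightarrow> 'i \<Rightarrow> (nat \<Rightarrow> 'i) \<Rightarrow> nat \<Rightarrow> bool" where
  "goodp W s I k p d \<longleftrightarrow> p ` {1..d} \<subseteq> I \<and> inj_on p {1..d} \<and> (d \<ge> 1 \<longrightarrow> p 1 = k) \<and>
     (\<forall>a\<in>{1..d}. \<forall>b\<in>{1..d}. a \<noteq> b \<longrightarrow> cox_m W s (p a) (p b) = (if a + 1 = b \<or> b + 1 = a then 3 else 2))"

lemma ypath_0: "ypath k p 0 = om k"
  by (simp add: ypath_def om_def fun_eq_iff)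

lemma supp_ypath: "supp (ypath k p d) \<subseteq> insert (Inr k) (Inl ` p ` {1..d})"
  by (auto simp: supp_def ypath_def)

lemma beta_ypath:
  fixes p :: "nat \<Rightarrow> 'i" and k l :: 'i
  assumes inj: "inj_on p {1..d}"
  shows "beta C l (ypath k p d) = Bm C (Inl l) (Inr k) - (\<Sum>a\<in>{1..d}. C l (p a))"
proof -
  define S :: "('i + 'i) set" where "S = (\<lambda>a. Inl (p a)) ` {1..d}"
  have fS: "finite S" by (simp add: S_def)
  have kS: "Inr k \<notin> S" by (auto simp: S_def)
  have sub: "supp (ypath k p d) \<subseteq> insert (Inr k) S"
    using supp_ypath[of k p d] by (simp add: S_def image_image)
  have fin2: "finite (insert (Inr k) S)" using fS by simp
  have "beta C l (ypath k p d) = (\<Sum>b\<in>insert (Inr k) S. ypath k p d b * Bm C (Inl l) b)"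
    unfolding beta_def by (rule lin_superset[OF fin2 sub])
  also have "\<dots> = ypath k p d (Inr k) * Bm C (Inl l) (Inr k) + (\<Sum>b\<in>S. ypath k p d b * Bm C (Inl l) b)"
    by (rule sum.insert[OF fS kS])
  also have "ypath k p d (Inr k) = 1" by (simp add: ypath_def)
  also have "(\<Sum>b\<in>S. ypath k p d b * Bm C (Inl l) b) = (\<Sum>b\<in>S. - Bm C (Inl l) b)"
  proof (rule sum.cong[OF refl])
    fix b assume "b \<in> S"
    then obtain a where "a \<in> {1..d}" "b = Inl (p a)" by (auto simp: S_def)
    then show "ypath k p d b * Bm C (Inl l) b = - Bm C (Inl l) b" by (auto simp: ypath_def)
  qed
  also have "(\<Sum>b\<in>S. - Bm C (Inl l) b) = (\<Sum>a\<in>{1..d}. - Bm C (Inl l) (Inl (p a)))"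
  proof -
    have "inj_on (\<lambda>a. Inl (p a) :: 'i + 'i) {1..d}"
    proof (rule inj_onI)
      fix a b assume "a \<in> {1..d}" "b \<in> {1..d}" "(Inl (p a) :: 'i + 'i) = Inl (p b)"
      then show "a = b" using inj_onD[OF inj] by simp
    qed
    from sum.reindex[OF this, of "\<lambda>b. - Bm C (Inl l) b"] show ?thesis unfolding S_def by (simp only: o_def)
  qed
  finally show ?thesis by (simp add: sum_negf)
qed

context tt_setup
begin

lemma wp_carrier: "p ` {1..d} \<subseteq> I \<Longrightarrow> wp W s p d \<in> carrier W"
proof (induct d)
  case 0 then show ?case using one_W by simp
next
  case (Suc d)
  have "p (Suc d) \<in> I" using Suc.prems by auto
  then have "s (p (Suc d)) \<in> carrier W" using sI by auto
  moreover have "p ` {1..d} \<subseteq> I" using Suc.prems by auto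
  ultimately show ?case using Suc mW by simp
qed

lemma cval2: "cval 2 = 0" by (simp add: cval_def)
lemma cval3: "cval 3 = 1/2" by (simp add: cval_def cos_60)

lemma goodp_mono: "goodp W s I k p d \<Longrightarrow> e \<le> d \<Longrightarrow> goodp W s I k p e"
  unfolding goodp_def by (auto intro: inj_on_subset)

lemma walk:
  assumes g: "goodp W s I k p d" and e: "e \<le> d"
  shows "\<rho> (wp W s p e) (om k) = ypath k p e"
  using e
proof (induct e)
  case 0 then show ?case by (simp add: rho_one ypath_0)
next
  case (Suc e)
  have gI: "p ` {1..d} \<subseteq> I" and inj: "inj_on p {1..d}" and p1: "d \<ge> 1 \<Longrightarrow> p 1 = k"
    and gm: "\<forall>a\<in>{1..d}. \<forall>b\<in>{1..d}. a \<noteq> b \<longrightarrow> cox_m W s (p a) (p b) = (if a + 1 = b \<or> b + 1 = a then 3 else 2)"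
    using g unfolding goodp_def by auto
  define q where "q = p (Suc e)"
  have qI: "q \<in> I" using gI Suc.prems by (auto simp: q_def)
  have inje: "inj_on p {1..e}" using inj Suc.prems by (auto intro: inj_on_subset)
  have qnot: "q \<notin> p ` {1..e}"
  proof
    assume "q \<in> p ` {1..e}"
    then obtain a where a: "a \<in> {1..e}" "p a = p (Suc e)" by (auto simp: q_def)
    have "a \<in> {1..d}" "Suc e \<in> {1..d}" using a Suc.prems by auto
    then have "a = Suc e" using inj_onD[OF inj a(2)] by simp
    then show False using a by simp
  qed
  have "p ` {1..e} \<subseteq> I" using gI Suc.prems by auto
  then have carr: "wp W s p e \<in> carrier W" by (rule wp_carrier)
  have sq: "s q \<in> carrier W" using sI qI by auto
  have step: "\<rho> (wp W s p (Suc e)) (om k) = sig C q (ypath k p e)"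
    using rho_mult[OF sq carr] Suc rho_s qI by (simp add: q_def)
  have beta: "beta C q (ypath k p e) = 1/2"
  proof (cases "e = 0")
    case True
    then have "q = k" using p1 Suc.prems by (simp add: q_def)
    then show ?thesis using True beta_ypath[OF inje] by simp
  next
    case False
    have qk: "q \<noteq> k"
    proof
      assume "q = k"
      then have "p (Suc e) = p 1" using p1 Suc.prems by (simp add: q_def)
      moreover have "Suc e \<in> {1..d}" "1 \<in> {1..d}" using Suc.prems by auto
      ultimately have "Suc e = 1" using inj_onD[OF inj] by blast
      then show False using False by simp
    qed
    have terms: "C q (p a) = (if a = e then -1/2 else 0)" if a: "a \<in> {1..e}" for a
    proof -
      have pa: "p a \<in> I" using gI a Suc.prems by auto
      have ne: "q \<noteq> p a" using qnot a by auto
      have "cox_m W s q (p a) = (if a = e then 3 else 2)"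
        using gm[rule_format, of "Suc e" a] a Suc.prems by (auto simp: q_def)
      then show ?thesis using Cm_cval[OF qI pa ne, of W s] cval2 cval3 by auto
    qed
    have "(\<Sum>a\<in>{1..e}. C q (p a)) = (\<Sum>a\<in>{1..e}. if a = e then -1/2 else 0)"
      by (rule sum.cong) (use terms in auto)
    also have "\<dots> = -1/2" using False by simp
    finally show ?thesis using beta_ypath[OF inje] qk by simp
  qed
  have "sig C q (ypath k p e) = ypath k p (Suc e)"
  proof
    fix b
    show "sig C q (ypath k p e) b = ypath k p (Suc e) b"
    proof (cases "b = Inl q")
      case True
      then show ?thesis using qnot beta by (auto simp: sig_def adde_def ypath_def q_def)
    next
      case False
      have "b \<in> Inl ` p ` {1..Suc e} \<longleftrightarrow> b \<in> Inl ` p ` {1..e}"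
        using False by (auto simp: q_def le_Suc_eq)
      then show ?thesis using False beta by (simp add: sig_def adde_def ypath_def)
    qed
  qed
  then show ?case using step by simp
qed

end




context tt_setup
begin

lemma ext_path:
  assumes k: "k \<in> I" "k \<notin> J" and g: "goodp W s I k p d" and d1: "d \<ge> 1"
    and l: "l \<in> I" "l \<notin> p ` {1..d}" and a0: "a0 \<in> {1..d}" "cox_m W s (p a0) l \<noteq> 2"
  shows "cox_m W s (p d) l = 3 \<and> (\<forall>a\<in>{1..d}. a \<noteq> d \<longrightarrow> cox_m W s (p a) l = 2)"
proof -
  have gI: "p ` {1..d} \<subseteq> I" and inj: "inj_on p {1..d}" and p1: "p 1 = k"
    using g d1 unfolding goodp_def by auto
  have lk: "l \<noteq> k" using l(2) p1 d1 by force
  define cc where "cc a = cval (cox_m W s (p a) l)" for a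
  have pa: "p a \<in> I" if "a \<in> {1..d}" for a using gI that by auto
  have lpa: "l \<noteq> p a" if "a \<in> {1..d}" for a using l(2) that by auto
  have Cl: "C l (p a) = - cc a" if a: "a \<in> {1..d}" for a
    using Cm_cval[OF l(1) pa[OF a] lpa[OF a], of W s] cox_m_sym[OF cs l(1) pa[OF a]] by (simp add: cc_def)
  have ne1: "cox_m W s (p a) l \<noteq> 1" if a: "a \<in> {1..d}" for a
    using cox_m_ne1[OF cs pa[OF a] l(1)] lpa[OF a] by auto
  have nn: "cc a \<ge> 0" if a: "a \<in> {1..d}" for a using cval_facts(1)[OF ne1[OF a]] by (simp add: cc_def)
  define y where "y = ypath k p d"
  define wd where "wd = wp W s p d"
  have wd: "wd \<in> carrier W" unfolding wd_def by (rule wp_carrier[OF gI])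
  have ry: "\<rho> wd (om k) = y" unfolding wd_def y_def by (rule walk[OF g order_refl])
  define \<beta> where "\<beta> = beta C l y"
  have beq: "\<beta> = (\<Sum>a\<in>{1..d}. cc a)"
  proof -
    have "\<beta> = Bm C (Inl l) (Inr k) - (\<Sum>a\<in>{1..d}. C l (p a))" unfolding \<beta>_def y_def by (rule beta_ypath[OF inj])
    also have "(\<Sum>a\<in>{1..d}. C l (p a)) = (\<Sum>a\<in>{1..d}. - cc a)" by (rule sum.cong) (auto simp: Cl)
    finally show ?thesis using lk by (simp add: sum_negf)
  qed
  have bge: "\<beta> \<ge> 1/2"
  proof -
    have "cc a0 \<le> (\<Sum>a\<in>{1..d}. cc a)" by (rule member_le_sum[OF a0(1)]) (auto intro: nn)
    moreover have "cc a0 \<ge> 1/2" using cval_facts(3)[OF ne1[OF a0(1)] a0(2)] by (simp add: cc_def)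
    ultimately show ?thesis using beq by simp
  qed
  have sl: "s l \<in> carrier W" using sI l(1) by auto
  define y' where "y' = adde y (-2 * \<beta>) (Inl l)"
  have ry': "\<rho> (s l \<otimes>\<^bsub>W\<^esub> wd) (om k) = y'"
    using rho_mult[OF sl wd] ry rho_s l(1) by (simp add: y'_def sig_def \<beta>_def)
  have yl: "y (Inl l) = 0" using l(2) by (auto simp: y_def ypath_def)
  have y'l: "y' (Inl l) = -2 * \<beta>" using yl by (simp add: y'_def adde_def)
  have "y' \<noteq> y" using y'l yl bge by auto
  then have Q1: "Q C (vdiff y' y) = 1" using lemmaP[OF k mW[OF sl wd] wd] ry ry' by simp
  have "vdiff y' y = (\<lambda>b. if b = Inl l then -2 * \<beta> else 0)"
    by (auto simp: vdiff_def y'_def adde_def fun_eq_iff)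
  then have "Q C (vdiff y' y) = (-2 * \<beta>) * (-2 * \<beta>)" by (simp add: Q_one)
  then have "4 * (\<beta> * \<beta>) = 1" using Q1 by simp
  then have "(2 * \<beta> - 1) * (2 * \<beta> + 1) = 0" by (simp add: algebra_simps)
  moreover have "2 * \<beta> + 1 \<noteq> 0" using bge by simp
  ultimately have b12: "\<beta> = 1/2" by simp
  define y1 where "y1 = ypath k p (d - 1)"
  have "p ` {1..d - 1} \<subseteq> p ` {1..d}" by (rule image_mono) auto
  then have wd1: "wp W s p (d - 1) \<in> carrier W" using gI by (intro wp_carrier) blast
  have ry1: "\<rho> (wp W s p (d - 1)) (om k) = y1" unfolding y1_def by (rule walk[OF g]) simp
  have dset: "{1..d} = insert d {1..d - 1}" using d1 by auto
  have pdn: "p d \<notin> p ` {1..d - 1}"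
  proof
    assume "p d \<in> p ` {1..d - 1}"
    then obtain a where a: "a \<in> {1..d - 1}" "p d = p a" by auto
    have "a \<in> {1..d}" "d \<in> {1..d}" using a d1 by auto
    then have "d = a" using inj_onD[OF inj a(2)] by simp
    then show False using a d1 by auto
  qed
  have pdl: "p d \<noteq> l" using l(2) d1 by auto
  have pdm: "Inl (p d) \<in> Inl ` p ` {1..d}" using d1 by auto
  have pdn': "Inl (p d) \<notin> Inl ` p ` {1..d - 1}" using pdn by auto
  have ln: "Inl l \<notin> Inl ` p ` {1..d}" using l(2) by auto
  have ln': "Inl l \<notin> Inl ` p ` {1..d - 1}" using l(2) by auto
  have y'_ap: "y' b = (if b = Inl l then y b - 2 * \<beta> else y b)" for b by (simp add: y'_def adde_def)
  have vd: "vdiff y' y1 = (\<lambda>b. if b = Inl (p d) then -1 else if b = Inl l then -1 else 0)"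
  proof
    fix b :: "'i + 'i"
    have mem: "b \<in> Inl ` p ` {1..d} \<longleftrightarrow> b \<in> Inl ` p ` {1..d - 1} \<or> b = Inl (p d)"
      using dset by auto
    show "vdiff y' y1 b = (if b = Inl (p d) then -1 else if b = Inl l then -1 else 0)"
    proof (cases "b = Inl (p d)")
      case True
      have "y' b = y b" using True pdl by (simp add: y'_ap)
      moreover have "y b = -1" unfolding y_def ypath_def using True pdm by simp
      moreover have "y1 b = 0" unfolding y1_def ypath_def using True pdn' by simp
      ultimately show ?thesis using True by (simp add: vdiff_def)
    next
      case F: False
      show ?thesis
      proof (cases "b = Inl l")
        case True
        have "y' b = y b - 1" using True b12 by (simp add: y'_ap)
        moreover have "y b = 0" unfolding y_def ypath_def using True ln by simp
        moreover have "y1 b = 0" unfolding y1_def ypath_def using True ln' by simp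
        ultimately show ?thesis using True F by (simp add: vdiff_def)
      next
        case False
        have "y' b = y b" using False by (simp add: y'_ap)
        moreover have "y b = y1 b" unfolding y_def y1_def ypath_def using mem F by simp
        ultimately show ?thesis using False F by (simp add: vdiff_def)
      qed
    qed
  qed
  have "y' \<noteq> y1"
  proof
    assume "y' = y1"
    then have "vdiff y' y1 (Inl l) = 0" by (simp add: vdiff_def)
    then show False using vd pdl by simp
  qed
  then have Q2: "Q C (vdiff y' y1) = 1" using lemmaP[OF k mW[OF sl wd] wd1] ry1 ry' by simp
  have Csym2: "Bm C (Inl l) (Inl (p d)) = Bm C (Inl (p d)) (Inl l)" using Csym by simp
  have "Q C (vdiff y' y1) = 1 * C (p d) (p d) + 1 * C l l + 2 * C (p d) l"
    unfolding vd using Q_two[of "Inl (p d)" "Inl l" C "-1" "-1"] pdl Csym2 by simp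
  then have "C (p d) l = -1/2" using Q2 by simp
  moreover have "C (p d) l = - cc d" using Cl[of d] d1 Csym by simp
  ultimately have ccd: "cc d = 1/2" by simp
  then have m3: "cox_m W s (p d) l = 3" using cval_facts(4)[OF ne1[of d]] d1 by (simp add: cc_def)
  have "(\<Sum>a\<in>{1..d} - {d}. cc a) = 0"
    using sum_diff1[of "{1..d}" cc d] beq b12 ccd d1 by simp
  then have "\<forall>a\<in>{1..d} - {d}. cc a = 0"
    using sum_nonneg_eq_0_iff[of "{1..d} - {d}" cc] nn by auto
  then have "\<forall>a\<in>{1..d}. a \<noteq> d \<longrightarrow> cox_m W s (p a) l = 2"
    using cval_facts(2) ne1 by (auto simp: cc_def)
  then show ?thesis using m3 by simp
qed

end




definition closedp :: "('a, 'b) monoid_scheme \<Rightarrow> ('i \<Rightarrow> 'a) \<Rightarrow> 'i set \<Rightarrow> (nat \<Rightarrow> 'i) \<Rightarrow> nat \<Rightarrow> bool" where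
  "closedp W s I p d \<longleftrightarrow> (\<forall>l\<in>I. l \<notin> p ` {1..d} \<longrightarrow> (\<forall>a\<in>{1..d}. cox_m W s (p a) l = 2))"

lemma goodp_cong: "(\<And>a. a \<in> {1..d} \<Longrightarrow> p a = q a) \<Longrightarrow> goodp W s I k p d \<Longrightarrow> goodp W s I k q d"
proof -
  assume eq: "\<And>a. a \<in> {1..d} \<Longrightarrow> p a = q a" and g: "goodp W s I k p d"
  have im: "p ` {1..d} = q ` {1..d}" using eq by (rule image_cong[OF refl])
  have inj: "inj_on q {1..d}" using g inj_on_cong[of "{1..d}" p q] eq unfolding goodp_def by blast
  have "1 \<le> d \<Longrightarrow> q 1 = k" using g eq[of 1] unfolding goodp_def by auto
  moreover have "\<forall>a\<in>{1..d}. \<forall>b\<in>{1..d}. a \<noteq> b \<longrightarrow> cox_m W s (q a) (q b) = (if a + 1 = b \<or> b + 1 = a then 3 else 2)"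
    using g eq unfolding goodp_def by (metis (no_types, lifting))
  ultimately show ?thesis using g im inj unfolding goodp_def by simp
qed

lemma goodp_1: "k \<in> I \<Longrightarrow> goodp W s I k (\<lambda>_. k) 1"
  unfolding goodp_def by auto

context tt_setup
begin

lemma good_ext:
  assumes k: "k \<in> I" "k \<notin> J" and g: "goodp W s I k p d" and d1: "d \<ge> 1" and nc: "\<not> closedp W s I p d"
  shows "\<exists>q. goodp W s I k q (Suc d) \<and> (\<forall>a\<in>{1..d}. q a = p a)"
proof -
  obtain l a0 where l: "l \<in> I" "l \<notin> p ` {1..d}" and a0: "a0 \<in> {1..d}" "cox_m W s (p a0) l \<noteq> 2"
    using nc unfolding closedp_def by blast
  have e: "cox_m W s (p d) l = 3 \<and> (\<forall>a\<in>{1..d}. a \<noteq> d \<longrightarrow> cox_m W s (p a) l = 2)"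
    by (rule ext_path[OF k g d1 l a0])
  have gI: "p ` {1..d} \<subseteq> I" and inj: "inj_on p {1..d}" and p1: "p 1 = k"
    and gm: "\<forall>a\<in>{1..d}. \<forall>b\<in>{1..d}. a \<noteq> b \<longrightarrow> cox_m W s (p a) (p b) = (if a + 1 = b \<or> b + 1 = a then 3 else 2)"
    using g d1 unfolding goodp_def by auto
  define q where "q = p(Suc d := l)"
  have qa: "q a = p a" if "a \<in> {1..d}" for a using that by (auto simp: q_def)
  have qd: "q (Suc d) = l" by (simp add: q_def)
  have ins: "{1..Suc d} = insert (Suc d) {1..d}" by auto
  have pI: "p a \<in> I" if "a \<in> {1..d}" for a using gI that by auto
  have "goodp W s I k q (Suc d)"
    unfolding goodp_def
  proof (intro conjI)
    show "q ` {1..Suc d} \<subseteq> I" unfolding ins using gI l(1) qa qd by auto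
    have "inj_on q {1..d}" using inj inj_on_cong[of "{1..d}" p q] qa by auto
    moreover have "q (Suc d) \<notin> q ` ({1..d} - {Suc d})" using l(2) qa qd by auto
    ultimately show "inj_on q {1..Suc d}" unfolding ins by (simp only: inj_on_insert) simp
    show "1 \<le> Suc d \<longrightarrow> q 1 = k" using p1 qa[of 1] d1 by auto
    show "\<forall>a\<in>{1..Suc d}. \<forall>b\<in>{1..Suc d}. a \<noteq> b \<longrightarrow> cox_m W s (q a) (q b) = (if a + 1 = b \<or> b + 1 = a then 3 else 2)"
    proof (intro ballI impI)
      fix a b assume a: "a \<in> {1..Suc d}" and b: "b \<in> {1..Suc d}" and ab: "a \<noteq> b"
      show "cox_m W s (q a) (q b) = (if a + 1 = b \<or> b + 1 = a then 3 else 2)"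
      proof (cases "a = Suc d")
        case True
        then have b': "b \<in> {1..d}" using b ab by auto
        have "cox_m W s (q a) (q b) = cox_m W s (p b) l"
          using True qd qa[OF b'] cox_m_sym[OF cs l(1) pI[OF b']] by simp
        also have "\<dots> = (if b = d then 3 else 2)" using e b' by auto
        finally show ?thesis using True b' by auto
      next
        case F: False
        then have a': "a \<in> {1..d}" using a by auto
        show ?thesis
        proof (cases "b = Suc d")
          case True
          have "cox_m W s (q a) (q b) = cox_m W s (p a) l" using True qd qa[OF a'] by simp
          also have "\<dots> = (if a = d then 3 else 2)" using e a' by auto
          finally show ?thesis using True a' by auto
        next
          case False
          then have b': "b \<in> {1..d}" using b by auto
          show ?thesis using gm a' b' ab qa by auto
        qed
      qed
    qed
  qed
  then show ?thesis using qa by blast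
qed

lemma good_unique:
  assumes k: "k \<in> I" "k \<notin> J"
  shows "goodp W s I k p d \<Longrightarrow> goodp W s I k q d \<Longrightarrow> a \<in> {1..d} \<Longrightarrow> p a = q a"
proof (induct d arbitrary: a)
  case 0 then show ?case by simp
next
  case (Suc d)
  have gp: "goodp W s I k p d" and gq: "goodp W s I k q d" using Suc.prems goodp_mono by auto
  have IH: "\<And>a. a \<in> {1..d} \<Longrightarrow> p a = q a" using Suc.hyps gp gq by blast
  show ?case
  proof (cases "a = Suc d")
    case False
    then show ?thesis using IH Suc.prems by auto
  next
    case True
    show ?thesis
    proof (cases "d = 0")
      case True
      then show ?thesis using Suc.prems \<open>a = Suc d\<close> unfolding goodp_def by auto
    next
      case False
      then have d1: "d \<ge> 1" by simp
      show ?thesis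
      proof (rule ccontr)
        assume ne: "p a \<noteq> q a"
        define l where "l = q (Suc d)"
        have gpI: "p ` {1..Suc d} \<subseteq> I" and injp: "inj_on p {1..Suc d}"
          and gmp: "\<forall>a\<in>{1..Suc d}. \<forall>b\<in>{1..Suc d}. a \<noteq> b \<longrightarrow> cox_m W s (p a) (p b) = (if a + 1 = b \<or> b + 1 = a then 3 else 2)"
          using Suc.prems unfolding goodp_def by auto
        have gqI: "q ` {1..Suc d} \<subseteq> I" and injq: "inj_on q {1..Suc d}"
          and gmq: "\<forall>a\<in>{1..Suc d}. \<forall>b\<in>{1..Suc d}. a \<noteq> b \<longrightarrow> cox_m W s (q a) (q b) = (if a + 1 = b \<or> b + 1 = a then 3 else 2)"
          using Suc.prems unfolding goodp_def by auto
        have lI: "l \<in> I" using gqI by (auto simp: l_def)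
        have lnot: "l \<notin> p ` {1..Suc d}"
        proof
          assume "l \<in> p ` {1..Suc d}"
          then obtain b where b: "b \<in> {1..Suc d}" "l = p b" by auto
          show False
          proof (cases "b = Suc d")
            case True then show False using ne b \<open>a = Suc d\<close> by (simp add: l_def)
          next
            case False
            then have "b \<in> {1..d}" using b by auto
            then have "q b = q (Suc d)" using IH b by (simp add: l_def)
            moreover have "b \<in> {1..Suc d}" "Suc d \<in> {1..Suc d}" using b by auto
            ultimately have "b = Suc d" using inj_onD[OF injq] by blast
            then show False using False by simp
          qed
        qed
        have dd: "d \<in> {1..Suc d}" using d1 by auto
        have "cox_m W s (q d) l = 3" using gmq dd by (auto simp: l_def)
        then have adj: "cox_m W s (p d) l \<noteq> 2" using IH[of d] d1 by auto
        have "cox_m W s (p (Suc d)) l = 3 \<and> (\<forall>b\<in>{1..Suc d}. b \<noteq> Suc d \<longrightarrow> cox_m W s (p b) l = 2)"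
          by (rule ext_path[OF k Suc.prems(1) _ lI lnot dd adj]) simp
        then show False using adj dd by auto
      qed
    qed
  qed
qed

lemma closure:
  assumes k: "k \<in> I" and g: "goodp W s I k p d" and d1: "d \<ge> 1" and cl: "closedp W s I p d"
    and conn: "\<forall>i\<in>I. (k, i) \<in> (cox_edge W s I)\<^sup>*"
  shows "I \<subseteq> p ` {1..d}"
proof
  fix i assume i: "i \<in> I"
  have "(k, i) \<in> (cox_edge W s I)\<^sup>*" using conn i by blast
  then show "i \<in> p ` {1..d}"
  proof (induct rule: rtrancl_induct)
    case base
    have "p 1 = k" using g d1 unfolding goodp_def by auto
    then show ?case using d1 by force
  next
    case (step y z)
    then have yz: "y \<in> I" "z \<in> I" "cox_m W s y z \<noteq> 2" by (auto simp: cox_edge_def)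
    obtain a where a: "a \<in> {1..d}" "y = p a" using step(3) by auto
    show ?case
    proof (rule ccontr)
      assume "z \<notin> p ` {1..d}"
      then have "cox_m W s (p a) z = 2" using cl yz(2) a(1) unfolding closedp_def by blast
      then show False using yz a by simp
    qed
  qed
qed

end

theorem proposition4p1:
  fixes W :: "('a, 'b) monoid_scheme" and s :: "'i \<Rightarrow> 'a" and I J :: "'i set"
  assumes "irreducible_coxeter_system W s I"
    and "J \<subseteq> I"
    and "two_transitive W (\<lambda>w C. l_coset W w C) (left_cosets W (parabolic W s J))"
  shows "countable I \<and>
    ((\<exists>k \<phi>. type_A W s I k \<phi> \<and> (J = I - {\<phi> 1} \<or> J = I - {\<phi> k})) \<or>
     (\<exists>\<phi>. type_A_omega W s I \<phi> \<and> J = I - {\<phi> 1}))"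
proof -
  have cs: "coxeter_system W s I" using assms(1) by (simp add: irreducible_coxeter_system_def)
  have conn0: "\<forall>i\<in>I. \<forall>j\<in>I. (i, j) \<in> (cox_edge W s I)\<^sup>*" using assms(1) by (simp add: irreducible_coxeter_system_def)
  obtain \<rho> where rho: "\<rho> \<in> hom W (BijGroup UNIV)" "\<forall>i\<in>I. \<rho> (s i) = sig (Cm W s I) i"
    using rho_exists[OF cs] by blast
  interpret T: tt_setup W s I J \<rho>
    by (unfold_locales) (use cs assms(2,3) rho in auto)
  obtain k where k: "k \<in> I" "k \<notin> J" using T.exists_k by blast
  have Jeq: "J = I - {k}" using T.unique_k[OF k] assms(2) k by blast
  have conn: "\<forall>i\<in>I. (k, i) \<in> (cox_edge W s I)\<^sup>*" using conn0 k by blast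
  show ?thesis
  proof (cases "\<exists>d p. d \<ge> 1 \<and> goodp W s I k p d \<and> closedp W s I p d")
    case True
    then obtain d p where d: "d \<ge> 1" "goodp W s I k p d" "closedp W s I p d" by blast
    have sub: "I \<subseteq> p ` {1..d}" by (rule T.closure[OF k(1) d(2) d(1) d(3) conn])
    have gI: "p ` {1..d} \<subseteq> I" and inj: "inj_on p {1..d}" and p1: "p 1 = k"
      and gm: "\<forall>a\<in>{1..d}. \<forall>b\<in>{1..d}. a \<noteq> b \<longrightarrow> cox_m W s (p a) (p b) = (if a + 1 = b \<or> b + 1 = a then 3 else 2)"
      using d unfolding goodp_def by auto
    have Ieq: "p ` {1..d} = I" using sub gI by blast
    have "type_A W s I d p" unfolding type_A_def bij_betw_def using inj Ieq gm by auto
    moreover have "countable I" using Ieq by (metis countable_finite finite_atLeastAtMost finite_imageI)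
    ultimately show ?thesis using Jeq p1 by blast
  next
    case False
    then have nc: "goodp W s I k p d \<Longrightarrow> d \<ge> 1 \<Longrightarrow> \<not> closedp W s I p d" for p d by blast
    have ex: "\<exists>p. goodp W s I k p (Suc d)" for d
    proof (induct d)
      case 0 then show ?case using goodp_1[OF k(1)] by auto
    next
      case (Suc d)
      then obtain p where "goodp W s I k p (Suc d)" by blast
      then show ?case using T.good_ext[OF k _ _ nc] by fastforce
    qed
    define P where "P d = (SOME p. goodp W s I k p d)" for d
    have P: "goodp W s I k (P d) d" if "d \<ge> 1" for d
    proof -
      have "d = Suc (d - 1)" using that by simp
      then have "\<exists>p. goodp W s I k p d" using ex[of "d - 1"] by metis
      then show ?thesis unfolding P_def by (rule someI_ex)
    qed
    define \<phi> where "\<phi> a = P a a" for a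
    have agree: "\<phi> a = P d a" if "a \<in> {1..d}" for a d
    proof -
      have "goodp W s I k (P d) a" using T.goodp_mono[OF P] that by auto
      moreover have "goodp W s I k (P a) a" using P that by auto
      ultimately show ?thesis unfolding \<phi>_def using T.good_unique[OF k] that by auto
    qed
    have gphi: "goodp W s I k \<phi> d" if "d \<ge> 1" for d
      by (rule goodp_cong[OF _ P[OF that]]) (use agree in auto)
    have phiI: "\<phi> a \<in> I" if "a \<ge> 1" for a using gphi[OF that] that unfolding goodp_def by auto
    have phi1: "\<phi> 1 = k" using gphi[of 1] unfolding goodp_def by auto
    have injphi: "inj_on \<phi> {1..}"
    proof (rule inj_onI)
      fix a b assume a: "a \<in> {1..}" and b: "b \<in> {1..}" and eq: "\<phi> a = \<phi> b"
      have "inj_on \<phi> {1..max a b}" using gphi[of "max a b"] a b unfolding goodp_def by auto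
      then show "a = b" using a b eq by (auto dest: inj_onD)
    qed
    have cm: "cox_m W s (\<phi> a) (\<phi> b) = (if a + 1 = b \<or> b + 1 = a then 3 else 2)"
      if "a \<in> {1..}" "b \<in> {1..}" "a \<noteq> b" for a b
      using gphi[of "max a b"] that unfolding goodp_def by auto
    have surj: "I \<subseteq> \<phi> ` {1..}"
    proof
      fix i assume i: "i \<in> I"
      have "(k, i) \<in> (cox_edge W s I)\<^sup>*" using conn i by blast
      then show "i \<in> \<phi> ` {1..}"
      proof (induct rule: rtrancl_induct)
        case base
        then show ?case using phi1 by force
      next
        case (step y z)
        then have yz: "y \<in> I" "z \<in> I" "cox_m W s y z \<noteq> 2" by (auto simp: cox_edge_def)
        obtain a where a: "a \<ge> 1" "y = \<phi> a" using step(3) by auto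
        show ?case
        proof (rule ccontr)
          assume zn: "z \<notin> \<phi> ` {1..}"
          have zn': "z \<notin> \<phi> ` {1..Suc a}" using zn by auto
          have a': "a \<in> {1..Suc a}" using a by auto
          have yz3: "cox_m W s (\<phi> a) z \<noteq> 2" using yz(3) a by simp
          have "cox_m W s (\<phi> (Suc a)) z = 3 \<and> (\<forall>b\<in>{1..Suc a}. b \<noteq> Suc a \<longrightarrow> cox_m W s (\<phi> b) z = 2)"
            using T.ext_path[OF k gphi[of "Suc a"] _ yz(2) zn' a' yz3] by simp
          then have "cox_m W s (\<phi> a) z = 2" using a' by simp
          then show False using yz3 by simp
        qed
      qed
    qed
    have "\<phi> ` {1..} = I" using surj phiI by auto
    then have "type_A_omega W s I \<phi>" unfolding type_A_omega_def bij_betw_def using injphi cm by auto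
    moreover have "countable I" using \<open>\<phi> ` {1..} = I\<close> by (metis countable_image countableI_type)
    ultimately show ?thesis using Jeq phi1 by blast
  qed
qed


end
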